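(* Fix one of the two variants $\sharp\in\{\text{lumped},\text{exact}\}$ described in the context. Let $\vec X^m\in\underline V^h_{\partial_0}$ satisfy assumption $(\mathfrak A)$, and let $\Delta t_m>0$. Then there exists a unique pair $(\delta\vec X^{m+1},\vec\kappa^{m+1})\in\underline V^h_\partial\times[W_\sharp]^2$ such that, with $\vec X^{m+1}=\vec X^m+\delta\vec X^{m+1}$, $$\Big(\vec X^m\cdot\vec e_1\,\tfrac{\vec X^{m+1}-\vec X^m}{\Delta t_m},\vec\chi\,|\vec X^m_\rho|\Big)_\sharp=\Big((\vec X^m\cdot\vec e_1)\vec\kappa^{m+1},\vec\chi\,|\vec X^m_\rho|\Big)_\sharp\quad\forall\,\vec\chi\in[W_\sharp]^2,$$ $$\Big((\vec X^m\cdot\vec e_1)\vec\kappa^{m+1},\vec\eta\,|\vec X^m_\rho|\Big)_\sharp+\big(\vec\eta\cdot\vec e_1,|\vec X^m_\rho|\big)+\Big((\vec X^m\cdot\vec e_1)\vec X^{m+1}_\rho,\vec\eta_\rho|\vec X^m_\rho|^{-1}\Big)=-\sum_{i=1}^2\sum_{p\in\partial_iI}\widehat\varrho^{(p)}(\vec X^m(p)\cdot\vec e_1)\,\vec\eta(p)\cdot\vec e_{3-i}\quad\forall\,\vec\eta\in\underline V^h_\partial .$$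
   Context: Setup. $\vec e_1=(1,0)^T$, $\vec e_2=(0,1)^T$; "$\cdot$" is the Euclidean inner product. $I$ is either the periodic interval $\mathbb R/\mathbb Z$ (with $\partial I=\emptyset$) or $I=(0,1)$ (with $\partial I=\{0,1\}$). $\partial I=\partial_DI\cup\partial_0I\cup\partial_1I\cup\partial_2I$ is a given disjoint partition, and $\widehat\varrho^{(p)}\in\mathbb R$, $p\in\{0,1\}$, are given constants with $|\widehat\varrho^{(p)}|\le1$. Let $J\ge3$, $h=1/J$, $q_j=jh$ ($j=0,\dots,J$; $q_0=q_J$ identified in the periodic case). $V^h$ is the space of continuous functions on $\overline I$ (periodic if $I=\mathbb R/\mathbb Z$) that are affine on each $[q_{j-1},q_j]$; $\underline V^h=[V^h]^2$; $\underline V^h_{\partial_0}=\{\vec\eta\in\underline V^h:\vec\eta(\rho)\cdot\vec e_1=0\ \forall\rho\in\partial_0I\}$; $\underline V^h_\partial=\{\vec\eta\in\underline V^h_{\partial_0}:\vec\eta(\rho)\cdot\vec e_i=0\ \forall\rho\in\partial_iI,\ i=1,2;\ \vec\eta(\rho)=\vec0\ \forall\rho\in\partial_DI\}$; $W^h_{\partial_0}=\{\chi\in V^h:\chi(\rho)=0\ \forall\rho\in\partial_0I\}$. $(\cdot,\cdot)$ is the $L^2(I)$ inner product (with dot product for vector functions), and for piecewise continuous $f,g$ the mass-lumped product is $(f,g)^h=\tfrac h2\sum_{j=1}^J[(fg)(q_j^-)+(fg)(q_{j-1}^+)]$. Two variants: in the "lumped" variant $(\cdot,\cdot)_\sharp=(\cdot,\cdot)^h$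 and $W_\sharp=W^h_{\partial_0}$; in the "exact" variant $(\cdot,\cdot)_\sharp=(\cdot,\cdot)$ and $W_\sharp=V^h$. Assumption $(\mathfrak A)$: $|\vec X^m_\rho|>0$ a.e. on $I$ and $\vec X^m(\rho)\cdot\vec e_1>0$ for all $\rho\in\overline I\setminus\partial_0I$. *)

theory Defs
  imports "HOL-Analysis.Analysis"
begin

text \<open>A flag per selects the periodic interval R/Z (per = True) or (0,1) (per = False).
  Functions are represented as maps real => _ ; only their values on [0,1] matter.\<close>

definition node :: "nat \<Rightarrow> nat \<Rightarrow> real" where
  "node J j = real j / real J"

definition e1 :: "real \<times> real" where "e1 = (1, 0)"
definition e2 :: "real \<times> real" where "e2 = (0, 1)"

definition bdry :: "bool \<Rightarrow> real set" where
  "bdry per = (if per then {} else {0, 1})"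

definition boundary_partition :: "bool \<Rightarrow> real set \<Rightarrow> real set \<Rightarrow> real set \<Rightarrow> real set \<Rightarrow> bool" where
  "boundary_partition per PD P0 P1 P2 \<longleftrightarrow>
     PD \<union> P0 \<union> P1 \<union> P2 = bdry per \<and>
     PD \<inter> P0 = {} \<and> PD \<inter> P1 = {} \<and> PD \<inter> P2 = {} \<and>
     P0 \<inter> P1 = {} \<and> P0 \<inter> P2 = {} \<and> P1 \<inter> P2 = {}"

definition Vh :: "nat \<Rightarrow> bool \<Rightarrow> (real \<Rightarrow> real) set" where
  "Vh J per = {f. continuous_on {0..1} f \<and>
      (\<forall>j\<in>{1..J}. \<exists>a b. \<forall>x\<in>{node J (j - 1)..node J j}. f x = a + b * x) \<and>
      (per \<longrightarrow> f 0 = f 1)}"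

definition VVh :: "nat \<Rightarrow> bool \<Rightarrow> (real \<Rightarrow> real \<times> real) set" where
  "VVh J per = {X. (\<lambda>x. X x \<bullet> e1) \<in> Vh J per \<and> (\<lambda>x. X x \<bullet> e2) \<in> Vh J per}"

definition VVh_d0 :: "nat \<Rightarrow> bool \<Rightarrow> real set \<Rightarrow> (real \<Rightarrow> real \<times> real) set" where
  "VVh_d0 J per P0 = {X \<in> VVh J per. \<forall>\<rho>\<in>P0. X \<rho> \<bullet> e1 = 0}"

definition VVh_d :: "nat \<Rightarrow> bool \<Rightarrow> real set \<Rightarrow> real set \<Rightarrow> real set \<Rightarrow> real set
    \<Rightarrow> (real \<Rightarrow> real \<times> real) set" where
  "VVh_d J per PD P0 P1 P2 = {X \<in> VVh_d0 J per P0.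
      (\<forall>\<rho>\<in>P1. X \<rho> \<bullet> e1 = 0) \<and> (\<forall>\<rho>\<in>P2. X \<rho> \<bullet> e2 = 0) \<and> (\<forall>\<rho>\<in>PD. X \<rho> = 0)}"

definition Wh_d0 :: "nat \<Rightarrow> bool \<Rightarrow> real set \<Rightarrow> (real \<Rightarrow> real) set" where
  "Wh_d0 J per P0 = {c \<in> Vh J per. \<forall>\<rho>\<in>P0. c \<rho> = 0}"

text \<open>Spatial derivative X_rho (defined a.e., namely away from the nodes).\<close>
definition drho :: "(real \<Rightarrow> real \<times> real) \<Rightarrow> real \<Rightarrow> real \<times> real" where
  "drho X x = vector_derivative X (at x)"

definition ip_exact :: "(real \<Rightarrow> real \<times> real) \<Rightarrow> (real \<Rightarrow> real \<times> real) \<Rightarrow> real" where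
  "ip_exact F G = integral {0..1} (\<lambda>x. F x \<bullet> G x)"

definition ip_lumped :: "nat \<Rightarrow> (real \<Rightarrow> real \<times> real) \<Rightarrow> (real \<Rightarrow> real \<times> real) \<Rightarrow> real" where
  "ip_lumped J F G = (1 / real J) / 2 * (\<Sum>j=1..J.
      Lim (at_left (node J j)) (\<lambda>x. F x \<bullet> G x) + Lim (at_right (node J (j - 1))) (\<lambda>x. F x \<bullet> G x))"

definition ip_sharp :: "bool \<Rightarrow> nat \<Rightarrow> (real \<Rightarrow> real \<times> real) \<Rightarrow> (real \<Rightarrow> real \<times> real) \<Rightarrow> real" where
  "ip_sharp lumped J F G = (if lumped then ip_lumped J F G else ip_exact F G)"

definition W_sharp :: "bool \<Rightarrow> nat \<Rightarrow> bool \<Rightarrow> real set \<Rightarrow> (real \<Rightarrow> real) set" where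
  "W_sharp lumped J per P0 = (if lumped then Wh_d0 J per P0 else Vh J per)"

definition WW_sharp :: "bool \<Rightarrow> nat \<Rightarrow> bool \<Rightarrow> real set \<Rightarrow> (real \<Rightarrow> real \<times> real) set" where
  "WW_sharp lumped J per P0 = {K. (\<lambda>x. K x \<bullet> e1) \<in> W_sharp lumped J per P0 \<and>
                                   (\<lambda>x. K x \<bullet> e2) \<in> W_sharp lumped J per P0}"

definition scheme_eqs :: "bool \<Rightarrow> nat \<Rightarrow> bool \<Rightarrow> real set \<Rightarrow> real set \<Rightarrow> real set \<Rightarrow> real set
    \<Rightarrow> (real \<Rightarrow> real) \<Rightarrow> real \<Rightarrow> (real \<Rightarrow> real \<times> real)
    \<Rightarrow> (real \<Rightarrow> real \<times> real) \<Rightarrow> (real \<Rightarrow> real \<times> real) \<Rightarrow> bool" where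
  "scheme_eqs lumped J per PD P0 P1 P2 rh dt Xm dX K \<longleftrightarrow>
    (let Xn = (\<lambda>x. Xm x + dX x) in
     (\<forall>c\<in>WW_sharp lumped J per P0.
        ip_sharp lumped J (\<lambda>x. ((Xm x \<bullet> e1) / dt) *\<^sub>R (Xn x - Xm x)) (\<lambda>x. norm (drho Xm x) *\<^sub>R c x)
      = ip_sharp lumped J (\<lambda>x. (Xm x \<bullet> e1) *\<^sub>R K x) (\<lambda>x. norm (drho Xm x) *\<^sub>R c x)) \<and>
     (\<forall>\<eta>\<in>VVh_d J per PD P0 P1 P2.
        ip_sharp lumped J (\<lambda>x. (Xm x \<bullet> e1) *\<^sub>R K x) (\<lambda>x. norm (drho Xm x) *\<^sub>R \<eta> x)
        + integral {0..1} (\<lambda>x. (\<eta> x \<bullet> e1) * norm (drho Xm x))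
        + integral {0..1} (\<lambda>x. ((Xm x \<bullet> e1) *\<^sub>R drho Xn x) \<bullet> (inverse (norm (drho Xm x)) *\<^sub>R drho \<eta> x))
      = - ((\<Sum>p\<in>P1. rh p * (Xm p \<bullet> e1) * (\<eta> p \<bullet> e2))
           + (\<Sum>p\<in>P2. rh p * (Xm p \<bullet> e1) * (\<eta> p \<bullet> e1)))))"

end

theory Submission
  imports Defs "Jordan_Normal_Form.Determinant"
begin

lemma GL:
  fixes M :: "nat \<Rightarrow> nat \<Rightarrow> real"
  assumes inj: "\<And>c. (\<forall>i<n. (\<Sum>j<n. M i j * c j) = 0) \<Longrightarrow> (\<forall>j<n. c j = 0)"
  shows "\<exists>c. \<forall>i<n. (\<Sum>j<n. M i j * c j) = f i"
proof -
  define A where "A = mat n n (\<lambda>(i,j). M i j)"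
  have A: "A \<in> carrier_mat n n" unfolding A_def by simp
  have "det A \<noteq> 0"
  proof
    assume "det A = 0"
    then obtain v where v: "v \<in> carrier_vec n" "v \<noteq> 0\<^sub>v n" "A *\<^sub>v v = 0\<^sub>v n"
      using det_0_iff_vec_prod_zero_field[OF A] by blast
    have "\<forall>i<n. (\<Sum>j<n. M i j * v $ j) = 0"
    proof (intro allI impI)
      fix i assume i: "i < n"
      have "(A *\<^sub>v v) $ i = 0" using v(3) i by simp
      then show "(\<Sum>j<n. M i j * v $ j) = 0" using i v(1)
        by (simp add: A_def mult_mat_vec_def scalar_prod_def lessThan_atLeast0)
    qed
    from inj[OF this] have "\<forall>j<n. v $ j = 0" .
    then have "v = 0\<^sub>v n" using v(1) by (intro eq_vecI) auto
    with v(2) show False by simp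
  qed
  from det_non_zero_imp_unit[OF A this, of "()"]
  obtain B where B: "B \<in> carrier_mat n n" "A * B = 1\<^sub>m n"
    unfolding Units_def by (auto simp: ring_mat_def)
  define x where "x = B *\<^sub>v vec n f"
  have "A *\<^sub>v x = vec n f" unfolding x_def
    using B A by (metis assoc_mult_mat_vec one_mult_mat_vec vec_carrier)
  show ?thesis
  proof (intro exI allI impI)
    fix i assume i: "i < n"
    have "(A *\<^sub>v x) $ i = f i" using \<open>A *\<^sub>v x = vec n f\<close> i by simp
    moreover have "x \<in> carrier_vec n" unfolding x_def using B by simp
    ultimately show "(\<Sum>j<n. M i j * x $ j) = f i" using i
      by (simp add: A_def mult_mat_vec_def scalar_prod_def lessThan_atLeast0)
  qed
qed
no_notation scalar_prod (infix "\<bullet>" 70)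


definition nodes :: "nat \<Rightarrow> real set" where "nodes J = node J ` {..J}"

definition pw :: "nat \<Rightarrow> (real \<Rightarrow> 'a::real_normed_vector) \<Rightarrow> bool" where
  "pw J f \<longleftrightarrow> (\<forall>j\<in>{1..J}. \<exists>g. continuous_on {node J (j-1)..node J j} g \<and>
      (\<forall>x\<in>{node J (j-1)<..<node J j}. f x = g x))"

lemma finite_nodes[simp]: "finite (nodes J)" by (simp add: nodes_def)

lemma node_less: "J > 0 \<Longrightarrow> i < j \<Longrightarrow> node J i < node J j"
  by (simp add: node_def divide_strict_right_mono)

lemma node_le: "J > 0 \<Longrightarrow> i \<le> j \<Longrightarrow> node J i \<le> node J j"
  by (simp add: node_def divide_right_mono)

lemma node_0[simp]: "node J 0 = 0" by (simp add: node_def)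
lemma node_J[simp]: "J > 0 \<Longrightarrow> node J J = 1" by (simp add: node_def)

lemma node_inj: "J > 0 \<Longrightarrow> node J i = node J j \<longleftrightarrow> i = j"
  by (simp add: node_def)

lemma node_in01: "J > 0 \<Longrightarrow> j \<le> J \<Longrightarrow> node J j \<in> {0..1}"
  using node_le[of J 0 j] node_le[of J j J] by simp

lemma elem_sub01: "J > 0 \<Longrightarrow> j \<in> {1..J} \<Longrightarrow> {node J (j-1)..node J j} \<subseteq> {0..1}"
  using node_in01[of J "j-1"] node_in01[of J j] by auto

lemma open_elem_not_node:
  assumes "J > 0" "j \<in> {1..J}" "x \<in> {node J (j-1)<..<node J j}"
  shows "x \<notin> nodes J" "x \<in> {0..1}"
proof -
  show "x \<notin> nodes J"
  proof
    assume "x \<in> nodes J"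
    then obtain i where i: "i \<le> J" "x = node J i" by (auto simp: nodes_def)
    have "real (j-1) / real J < real i / real J" "real i / real J < real j / real J"
      using assms i by (auto simp: node_def)
    then have "real (j-1) < real i" "real i < real j" using assms(1)
      by (simp_all add: divide_less_cancel)
    then show False using assms(2) by auto
  qed
  show "x \<in> {0..1}" using elem_sub01[OF assms(1,2)] assms(3) by auto
qed

lemma elem_cover:
  assumes J: "J > 0" and x: "x \<in> {0..1}" "x \<notin> nodes J"
  shows "\<exists>j\<in>{1..J}. x \<in> {node J (j-1)<..<node J j}"
proof -
  define j where "j = nat \<lceil>real J * x\<rceil>"
  have nI: "real J * x \<notin> \<int>"
  proof
    assume "real J * x \<in> \<int>"
    then obtain k where k: "real J * x = of_int k" by (auto elim: Ints_cases)
    have a: "0 \<le> real J * x" using x by auto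
    have b: "real J * x \<le> real J" using x mult_left_le[of x "real J"] by auto
    have "0 \<le> k" using a k by linarith
    moreover have "real_of_int k \<le> real J" using b k by linarith
    then have "k \<le> int J" by linarith
    ultimately have "0 \<le> k" "k \<le> int J" by auto
    then have "x = node J (nat k)" using k J by (auto simp: node_def field_simps)
    moreover have "nat k \<le> J" using \<open>k \<le> int J\<close> by auto
    ultimately show False using x by (auto simp: nodes_def)
  qed
  have c1: "real_of_int \<lceil>real J * x\<rceil> - 1 < real J * x" by linarith
  have c2: "real J * x < real_of_int \<lceil>real J * x\<rceil>"
    using nI le_of_int_ceiling[of "real J * x"] by (metis Ints_of_int order_le_less)
  have "0 \<le> real J * x" using x by auto
  then have "0 < \<lceil>real J * x\<rceil>" using c2 by linarith
  have "real J * x \<le> real J" using x J by auto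
  then have "\<lceil>real J * x\<rceil> \<le> int J" by (simp add: ceiling_le_iff)
  have jr: "real j = real_of_int \<lceil>real J * x\<rceil>" using \<open>0 < \<lceil>real J * x\<rceil>\<close> by (simp add: j_def)
  have "1 \<le> j" using \<open>0 < \<lceil>real J * x\<rceil>\<close> unfolding j_def by linarith
  moreover have "j \<le> J" using \<open>\<lceil>real J * x\<rceil> \<le> int J\<close> unfolding j_def by linarith
  ultimately have "j \<in> {1..J}" by auto
  moreover have "real (j - 1) = real j - 1" using \<open>j \<in> {1..J}\<close> by auto
  ultimately show ?thesis using c1 c2 J jr
    by (intro bexI[of _ j]) (auto simp: node_def field_simps)
qed

lemma nodes_in01: "J > 0 \<Longrightarrow> nodes J \<subseteq> {0..1}"
  using node_in01 by (auto simp: nodes_def)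

lemma elem_cover_closed:
  assumes J: "J > 0" and x: "x \<in> {0..1}"
  shows "\<exists>j\<in>{1..J}. x \<in> {node J (j-1)..node J j}"
proof (cases "x \<in> nodes J")
  case True
  then obtain i where i: "i \<le> J" "x = node J i" by (auto simp: nodes_def)
  show ?thesis
  proof (cases "i = 0")
    case True thus ?thesis using i J node_le[OF J, of 0 1] by (intro bexI[of _ 1]) auto
  next
    case False thus ?thesis using i J node_le[OF J, of "i-1" i] by (intro bexI[of _ i]) auto
  qed
next
  case False
  then obtain j where "j\<in>{1..J}" "x \<in> {node J (j-1)<..<node J j}" using elem_cover[OF J x] by blast
  then show ?thesis by (intro bexI[of _ j]) auto
qed

lemma pw_cont: "J > 0 \<Longrightarrow> continuous_on {0..1} f \<Longrightarrow> pw J f"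
  unfolding pw_def by (metis continuous_on_subset elem_sub01)

lemma pw_const: "pw J (\<lambda>x. c)"
  unfolding pw_def by (auto intro!: exI[of _ "\<lambda>x. c"])

lemma pw_locconst: "(\<And>j. j\<in>{1..J} \<Longrightarrow> \<exists>v. \<forall>x\<in>{node J (j-1)<..<node J j}. f x = v) \<Longrightarrow> pw J f"
  unfolding pw_def by (metis continuous_on_const)

lemma pw_comb:
  assumes "pw J f" "pw J g"
    and H: "continuous_on UNIV H"
  shows "pw J (\<lambda>x. H (f x, g x))"
  unfolding pw_def
proof
  fix j assume j: "j \<in> {1..J}"
  obtain f' where f': "continuous_on {node J (j-1)..node J j} f'" "\<forall>x\<in>{node J (j-1)<..<node J j}. f x = f' x"
    using assms(1) j unfolding pw_def by blast
  obtain g' where g': "continuous_on {node J (j-1)..node J j} g'" "\<forall>x\<in>{node J (j-1)<..<node J j}. g x = g' x"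
    using assms(2) j unfolding pw_def by blast
  have "continuous_on {node J (j-1)..node J j} (\<lambda>x. H (f' x, g' x))"
    by (rule continuous_on_compose2[OF H]) (rule continuous_on_Pair[OF f'(1) g'(1)], simp)
  then show "\<exists>k. continuous_on {node J (j-1)..node J j} k \<and> (\<forall>x\<in>{node J (j-1)<..<node J j}. H (f x, g x) = k x)"
    using f' g' by auto
qed

lemma pw_add: "pw J f \<Longrightarrow> pw J g \<Longrightarrow> pw J (\<lambda>x. f x + g x)"
  using pw_comb[of J f g "\<lambda>p. fst p + snd p"] by (simp add: continuous_on_add continuous_on_fst continuous_on_snd continuous_on_id)
lemma pw_diff: "pw J f \<Longrightarrow> pw J g \<Longrightarrow> pw J (\<lambda>x. f x - g x)"
  using pw_comb[of J f g "\<lambda>p. fst p - snd p"] by (simp add: continuous_on_diff continuous_on_fst continuous_on_snd continuous_on_id)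
lemma pw_mult: "pw J f \<Longrightarrow> pw J g \<Longrightarrow> pw J (\<lambda>x. f x * (g x :: real))"
  using pw_comb[of J f g "\<lambda>p. fst p * snd p"] by (simp add: continuous_on_mult continuous_on_fst continuous_on_snd continuous_on_id)
lemma pw_scaleR: "pw J f \<Longrightarrow> pw J g \<Longrightarrow> pw J (\<lambda>x. f x *\<^sub>R g x)"
  using pw_comb[of J f g "\<lambda>p. fst p *\<^sub>R snd p"] by (simp add: continuous_on_scaleR continuous_on_fst continuous_on_snd continuous_on_id)
lemma pw_inner: "pw J f \<Longrightarrow> pw J g \<Longrightarrow> pw J (\<lambda>x. f x \<bullet> (g x :: 'a::real_inner))"
  using pw_comb[of J f g "\<lambda>p. fst p \<bullet> snd p"] by (simp add: continuous_on_inner continuous_on_fst continuous_on_snd continuous_on_id)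
lemma pw_sum: "finite L \<Longrightarrow> (\<And>l. l \<in> L \<Longrightarrow> pw J (f l)) \<Longrightarrow> pw J (\<lambda>x. \<Sum>l\<in>L. f l x)"
proof (induction L rule: finite_induct)
  case empty then show ?case by (simp add: pw_const)
next
  case (insert a F) then show ?case by (simp add: pw_add)
qed


definition Isharp :: "bool \<Rightarrow> nat \<Rightarrow> (real \<Rightarrow> real) \<Rightarrow> real" where
  "Isharp lumped J P = (if lumped then (1 / real J) / 2 * (\<Sum>j=1..J.
      Lim (at_left (node J j)) P + Lim (at_right (node J (j - 1))) P) else integral {0..1} P)"

lemma ip_sharp_Isharp: "ip_sharp lumped J F G = Isharp lumped J (\<lambda>x. F x \<bullet> G x)"
  by (simp add: ip_sharp_def ip_lumped_def ip_exact_def Isharp_def)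

lemma pwE:
  assumes "pw J f" "j \<in> {1..J}"
  obtains g where "continuous_on {node J (j-1)..node J j} g" "\<forall>x\<in>{node J (j-1)<..<node J j}. f x = g x"
  using assms unfolding pw_def by blast

lemma at_left_elem:
  assumes "a < (b::real)"
  shows "at b within {a<..<b} = at_left b"
  by (rule at_within_nhd[of _ "{a<..}"]) (use assms in auto)

lemma at_right_elem:
  assumes "a < (b::real)"
  shows "at a within {a<..<b} = at_right a"
  by (rule at_within_nhd[of _ "{..<b}"]) (use assms in auto)

lemma pw_tendsto:
  fixes P :: "real \<Rightarrow> 'a::real_normed_vector"
  assumes J: "J > 0" and j: "j \<in> {1..J}"
    and g: "continuous_on {node J (j-1)..node J j} g" "\<forall>x\<in>{node J (j-1)<..<node J j}. P x = g x"
  shows "(P \<longlongrightarrow> g (node J j)) (at_left (node J j))"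
    "(P \<longlongrightarrow> g (node J (j-1))) (at_right (node J (j-1)))"
proof -
  have lt: "node J (j-1) < node J j" using node_less[OF J, of "j-1" j] j by auto
  have "(g \<longlongrightarrow> g (node J j)) (at (node J j) within {node J (j-1)..node J j})"
    using g(1) lt unfolding continuous_on_def by auto
  then have "(g \<longlongrightarrow> g (node J j)) (at (node J j) within {node J (j-1)<..<node J j})"
    by (rule tendsto_within_subset) auto
  then have "(g \<longlongrightarrow> g (node J j)) (at_left (node J j))" using at_left_elem[OF lt] by simp
  moreover have "eventually (\<lambda>x. P x = g x) (at_left (node J j))"
    using eventually_at_left_real[OF lt] by eventually_elim (use g(2) in auto)
  ultimately show "(P \<longlongrightarrow> g (node J j)) (at_left (node J j))"
    using tendsto_cong by blast
  have "(g \<longlongrightarrow> g (node J (j-1))) (at (node J (j-1)) within {node J (j-1)..node J j})"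
    using g(1) lt unfolding continuous_on_def by auto
  then have "(g \<longlongrightarrow> g (node J (j-1))) (at (node J (j-1)) within {node J (j-1)<..<node J j})"
    by (rule tendsto_within_subset) auto
  then have "(g \<longlongrightarrow> g (node J (j-1))) (at_right (node J (j-1)))" using at_right_elem[OF lt] by simp
  moreover have "eventually (\<lambda>x. P x = g x) (at_right (node J (j-1)))"
    using eventually_at_right_real[OF lt] by eventually_elim (use g(2) in auto)
  ultimately show "(P \<longlongrightarrow> g (node J (j-1))) (at_right (node J (j-1)))"
    using tendsto_cong by blast
qed

lemma pw_Lim:
  fixes P :: "real \<Rightarrow> 'a::real_normed_vector"
  assumes J: "J > 0" and j: "j \<in> {1..J}"
    and g: "continuous_on {node J (j-1)..node J j} g" "\<forall>x\<in>{node J (j-1)<..<node J j}. P x = g x"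
  shows "Lim (at_left (node J j)) P = g (node J j)" "Lim (at_right (node J (j-1))) P = g (node J (j-1))"
  using pw_tendsto[OF assms] by (auto intro: tendsto_Lim)

lemma pw_tendsto_Lim:
  fixes P :: "real \<Rightarrow> 'a::real_normed_vector"
  assumes J: "J > 0" and j: "j \<in> {1..J}" and "pw J P"
  shows "(P \<longlongrightarrow> Lim (at_left (node J j)) P) (at_left (node J j))"
    "(P \<longlongrightarrow> Lim (at_right (node J (j-1))) P) (at_right (node J (j-1)))"
proof -
  obtain g where g: "continuous_on {node J (j-1)..node J j} g" "\<forall>x\<in>{node J (j-1)<..<node J j}. P x = g x"
    using pwE[OF assms(3) j] by blast
  show "(P \<longlongrightarrow> Lim (at_left (node J j)) P) (at_left (node J j))"
    "(P \<longlongrightarrow> Lim (at_right (node J (j-1))) P) (at_right (node J (j-1)))"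
    using pw_tendsto[OF J j g] pw_Lim[OF J j g] by auto
qed

lemma pw_integrable:
  assumes J: "J > 0" and P: "pw J (P :: real \<Rightarrow> real)"
  shows "P integrable_on {0..1}"
proof -
  have "k \<le> J \<Longrightarrow> P integrable_on {0..node J k}" for k
  proof (induction k)
    case 0
    then show ?case using integrable_on_refl[of P 0] by simp
  next
    case (Suc k)
    have j: "Suc k \<in> {1..J}" using Suc by auto
    obtain g where g: "continuous_on {node J k..node J (Suc k)} g" "\<forall>x\<in>{node J k<..<node J (Suc k)}. P x = g x"
      using pwE[OF P j] by auto
    have "g integrable_on {node J k..node J (Suc k)}" using g(1) by (rule integrable_continuous_interval)
    moreover have "\<forall>x\<in>{node J k..node J (Suc k)} - {node J k, node J (Suc k)}. P x = g x"
      using g(2) by auto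
    ultimately have "P integrable_on {node J k..node J (Suc k)}"
      using integrable_spike_finite[of "{node J k, node J (Suc k)}" "{node J k..node J (Suc k)}" P g] by blast
    then show ?case
      using Suc node_le[OF J, of 0 k] node_le[OF J, of k "Suc k"]
      using Henstock_Kurzweil_Integration.integrable_combine[of 0 "node J k" "node J (Suc k)" P] by simp
  qed
  from this[of J] J show ?thesis by simp
qed

lemma Lim_cong_ev: assumes "eventually (\<lambda>x. f x = g x) F" shows "Lim F f = Lim F g"
  using Lim_cong[OF assms refl] .

lemma Isharp_cong:
  assumes J: "J > 0" and eq: "\<forall>x\<in>{0..1} - nodes J. P x = Q x"
  shows "Isharp lumped J P = Isharp lumped J Q"
proof -
  have "Lim (at_left (node J j)) P = Lim (at_left (node J j)) Q \<and>
        Lim (at_right (node J (j-1))) P = Lim (at_right (node J (j-1))) Q" if j: "j \<in> {1..J}" for j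
  proof -
    have lt: "node J (j-1) < node J j" using node_less[OF J, of "j-1" j] j by auto
    have e: "\<forall>x\<in>{node J (j-1)<..<node J j}. P x = Q x"
      using eq open_elem_not_node[OF J j] by auto
    have "eventually (\<lambda>x. P x = Q x) (at_left (node J j))"
      using eventually_at_left_real[OF lt] by eventually_elim (use e in auto)
    moreover have "eventually (\<lambda>x. P x = Q x) (at_right (node J (j-1)))"
      using eventually_at_right_real[OF lt] by eventually_elim (use e in auto)
    ultimately show ?thesis by (simp add: Lim_cong_ev)
  qed
  then have S: "(\<Sum>j=1..J. Lim (at_left (node J j)) P + Lim (at_right (node J (j - 1))) P) =
      (\<Sum>j=1..J. Lim (at_left (node J j)) Q + Lim (at_right (node J (j - 1))) Q)"
    by (intro sum.cong refl) auto
  moreover have "integral {0..1} P = integral {0..1} Q"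
    by (rule integral_spike[of "nodes J"]) (use eq in \<open>auto intro: negligible_finite\<close>)
  ultimately show ?thesis unfolding Isharp_def by simp
qed

lemma Isharp_lincomb:
  assumes J: "J > 0" and L: "finite L" and pw: "\<And>l. l \<in> L \<Longrightarrow> pw J (P l)"
    and eq: "\<forall>x\<in>{0..1} - nodes J. Q x = (\<Sum>l\<in>L. c l * P l x)"
  shows "Isharp lumped J Q = (\<Sum>l\<in>L. c l * Isharp lumped J (P l))"
proof -
  have "Isharp lumped J Q = Isharp lumped J (\<lambda>x. \<Sum>l\<in>L. c l * P l x)"
    by (rule Isharp_cong[OF J eq])
  also have "\<dots> = (\<Sum>l\<in>L. c l * Isharp lumped J (P l))"
  proof (cases lumped)
    case True
    have "Lim (at_left (node J j)) (\<lambda>x. \<Sum>l\<in>L. c l * P l x) = (\<Sum>l\<in>L. c l * Lim (at_left (node J j)) (P l)) \<and>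
          Lim (at_right (node J (j-1))) (\<lambda>x. \<Sum>l\<in>L. c l * P l x) = (\<Sum>l\<in>L. c l * Lim (at_right (node J (j-1))) (P l))"
      if j: "j \<in> {1..J}" for j
    proof -
      have "((\<lambda>x. \<Sum>l\<in>L. c l * P l x) \<longlongrightarrow> (\<Sum>l\<in>L. c l * Lim (at_left (node J j)) (P l))) (at_left (node J j))"
        by (rule tendsto_sum, rule tendsto_mult, rule tendsto_const, rule pw_tendsto_Lim(1)[OF J j pw], assumption)
      moreover have "((\<lambda>x. \<Sum>l\<in>L. c l * P l x) \<longlongrightarrow> (\<Sum>l\<in>L. c l * Lim (at_right (node J (j-1))) (P l))) (at_right (node J (j-1)))"
        by (rule tendsto_sum, rule tendsto_mult, rule tendsto_const, rule pw_tendsto_Lim(2)[OF J j pw], assumption)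
      ultimately show ?thesis by (simp add: tendsto_Lim)
    qed
    then have "(\<Sum>j=1..J. Lim (at_left (node J j)) (\<lambda>x. \<Sum>l\<in>L. c l * P l x) + Lim (at_right (node J (j - 1))) (\<lambda>x. \<Sum>l\<in>L. c l * P l x))
       = (\<Sum>j=1..J. \<Sum>l\<in>L. c l * (Lim (at_left (node J j)) (P l) + Lim (at_right (node J (j - 1))) (P l)))"
      by (intro sum.cong refl) (simp add: sum.distrib distrib_left)
    also have "\<dots> = (\<Sum>l\<in>L. \<Sum>j=1..J. c l * (Lim (at_left (node J j)) (P l) + Lim (at_right (node J (j - 1))) (P l)))"
      by (rule sum.swap)
    also have "\<dots> = (\<Sum>l\<in>L. c l * (\<Sum>j=1..J. Lim (at_left (node J j)) (P l) + Lim (at_right (node J (j - 1))) (P l)))"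
      by (simp add: sum_distrib_left)
    finally show ?thesis using True unfolding Isharp_def
      by (simp add: sum_distrib_left mult_ac)
  next
    case False
    have "integral {0..1} (\<lambda>x. \<Sum>l\<in>L. c l * P l x) = (\<Sum>l\<in>L. integral {0..1} (\<lambda>x. c l * P l x))"
    proof (rule integral_sum[OF L])
      fix l assume "l \<in> L"
      then have "P l integrable_on {0..1}" using pw_integrable[OF J pw] by blast
      then show "(\<lambda>x. c l * P l x) integrable_on {0..1}" using integrable_on_cmult_left[of "P l" _ "c l"] by simp
    qed
    then show ?thesis using False unfolding Isharp_def by simp
  qed
  finally show ?thesis .
qed

lemma spike_nodes: "(P::real\<Rightarrow>real) integrable_on S \<Longrightarrow> (\<lambda>x. if x \<in> nodes J then 0 else P x) integrable_on S"
  by (rule integrable_spike_finite[where S="nodes J" and f=P]) auto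

lemma Isharp_nonneg:
  fixes P :: "real \<Rightarrow> real"
  assumes J: "J > 0" and P: "pw J P" and nn: "\<forall>x\<in>{0..1} - nodes J. 0 \<le> P x"
  shows "0 \<le> Isharp lumped J P"
proof (cases lumped)
  case True
  have "0 \<le> Lim (at_left (node J j)) P \<and> 0 \<le> Lim (at_right (node J (j-1))) P" if j: "j \<in> {1..J}" for j
  proof -
    have lt: "node J (j-1) < node J j" using node_less[OF J, of "j-1" j] j by auto
    have e: "\<forall>x\<in>{node J (j-1)<..<node J j}. 0 \<le> P x"
      using nn open_elem_not_node[OF J j] by auto
    have "eventually (\<lambda>x. 0 \<le> P x) (at_left (node J j))"
      using eventually_at_left_real[OF lt] by eventually_elim (use e in auto)
    moreover have "eventually (\<lambda>x. 0 \<le> P x) (at_right (node J (j-1)))"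
      using eventually_at_right_real[OF lt] by eventually_elim (use e in auto)
    ultimately show ?thesis using pw_tendsto_Lim[OF J j P]
      by (auto intro: tendsto_lowerbound)
  qed
  then have "0 \<le> (\<Sum>j=1..J. Lim (at_left (node J j)) P + Lim (at_right (node J (j - 1))) P)"
    by (intro sum_nonneg add_nonneg_nonneg) auto
  then show ?thesis using True unfolding Isharp_def by simp
next
  case False
  have "integral {0..1} P = integral {0..1} (\<lambda>x. if x \<in> nodes J then 0 else P x)"
    by (rule integral_spike[of "nodes J"]) (auto intro: negligible_finite)
  also have "0 \<le> \<dots>"
    by (rule integral_nonneg)
      (auto intro!: spike_nodes pw_integrable[OF J P] simp: nn)
  finally show ?thesis using False unfolding Isharp_def by simp
qed

lemma lumped_zero:
  fixes P :: "real \<Rightarrow> real"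
  assumes J: "J > 0" and P: "pw J P" and nn: "\<forall>x\<in>{0..1} - nodes J. 0 \<le> P x"
    and z: "Isharp True J P = 0" and j: "j \<in> {1..J}"
  shows "Lim (at_left (node J j)) P = 0 \<and> Lim (at_right (node J (j-1))) P = 0"
proof -
  have nn2: "0 \<le> Lim (at_left (node J j)) P \<and> 0 \<le> Lim (at_right (node J (j-1))) P" if j: "j \<in> {1..J}" for j
  proof -
    have lt: "node J (j-1) < node J j" using node_less[OF J, of "j-1" j] j by auto
    have e: "\<forall>x\<in>{node J (j-1)<..<node J j}. 0 \<le> P x"
      using nn open_elem_not_node[OF J j] by auto
    have "eventually (\<lambda>x. 0 \<le> P x) (at_left (node J j))"
      using eventually_at_left_real[OF lt] by eventually_elim (use e in auto)
    moreover have "eventually (\<lambda>x. 0 \<le> P x) (at_right (node J (j-1)))"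
      using eventually_at_right_real[OF lt] by eventually_elim (use e in auto)
    ultimately show ?thesis using pw_tendsto_Lim[OF J j P]
      by (auto intro: tendsto_lowerbound)
  qed
  have "(\<Sum>j=1..J. Lim (at_left (node J j)) P + Lim (at_right (node J (j - 1))) P) = 0"
    using z J unfolding Isharp_def by simp
  then have "\<forall>j\<in>{1..J}. Lim (at_left (node J j)) P + Lim (at_right (node J (j - 1))) P = 0"
    by (subst (asm) sum_nonneg_eq_0_iff) (use nn2 in auto)
  then have "Lim (at_left (node J j)) P + Lim (at_right (node J (j - 1))) P = 0" using j by blast
  then show ?thesis using nn2[OF j] by linarith
qed

lemma int_zero_pt:
  fixes P g :: "real \<Rightarrow> real"
  assumes J: "J > 0" and P: "pw J P" and nn: "\<forall>x\<in>{0..1} - nodes J. 0 \<le> P x"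
    and z: "integral {0..1} P = 0" and j: "j \<in> {1..J}"
    and g: "continuous_on {node J (j-1)..node J j} g" "\<forall>x\<in>{node J (j-1)<..<node J j}. P x = g x"
    and y: "y \<in> {node J (j-1)<..<node J j}"
  shows "g y = 0"
proof -
  define a where "a = node J (j-1)"
  define b where "b = node J j"
  have lt: "a < b" using node_less[OF J, of "j-1" j] j by (auto simp: a_def b_def)
  have sub: "{a..b} \<subseteq> {0..1}" using elem_sub01[OF J j] by (simp add: a_def b_def)
  define P' where "P' x = (if x \<in> nodes J then 0 else P x)" for x
  have iP: "P integrable_on {0..1}" by (rule pw_integrable[OF J P])
  have iP': "P' integrable_on {0..1}"
    unfolding P'_def by (rule spike_nodes[OF iP])
  have "integral {0..1} P' = integral {0..1} P"
    by (rule integral_spike[of "nodes J"]) (auto intro: negligible_finite simp: P'_def)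
  then have z': "integral {0..1} P' = 0" using z by simp
  have nn': "\<forall>x\<in>{0..1}. 0 \<le> P' x" using nn by (auto simp: P'_def)
  have iP'ab: "P' integrable_on {a..b}" by (rule integrable_subinterval_real[OF iP' sub])
  have "integral {a..b} P' \<le> integral {0..1} P'"
    by (rule integral_subset_le[OF sub iP'ab iP' nn'])
  moreover have "0 \<le> integral {a..b} P'" by (rule integral_nonneg[OF iP'ab]) (use nn' sub in auto)
  ultimately have zab: "integral {a..b} P' = 0" using z' by simp
  define g' where "g' x = max 0 (g x)" for x
  have cg': "continuous_on {a..b} g'" unfolding g'_def a_def b_def
    by (intro continuous_intros g(1))
  have eqo: "\<forall>x\<in>{a<..<b}. P' x = g' x \<and> P x = g x \<and> 0 \<le> g x"
  proof
    fix x assume x: "x \<in> {a<..<b}"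
    have "x \<notin> nodes J" "x \<in> {0..1}" using open_elem_not_node[OF J j] x by (auto simp: a_def b_def)
    moreover have "P x = g x" using g(2) x by (auto simp: a_def b_def)
    moreover have "0 \<le> P x" using nn \<open>x \<notin> nodes J\<close> \<open>x \<in> {0..1}\<close> by auto
    ultimately show "P' x = g' x \<and> P x = g x \<and> 0 \<le> g x" by (auto simp: P'_def g'_def)
  qed
  have "integral {a..b} g' = integral {a..b} P'"
    by (rule integral_spike[of "{a,b}"]) (use eqo in \<open>auto intro: negligible_finite\<close>)
  then have "(g' has_integral 0) {a..b}"
    using zab integrable_integral[OF integrable_continuous_interval[OF cg']] by simp
  then have "g' y = 0"
    using has_integral_0_cbox_imp_0[of "a" "b" g' y] cg' lt y
    by (auto simp: g'_def a_def b_def)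
  then show "g y = 0" using eqo y by (auto simp: g'_def a_def b_def)
qed


lemma inner_e1: "(x::real\<times>real) \<bullet> e1 = fst x" by (cases x) (simp add: e1_def)
lemma inner_e2: "(x::real\<times>real) \<bullet> e2 = snd x" by (cases x) (simp add: e2_def)

lemma Vh_affine: "f \<in> Vh J per \<Longrightarrow> j \<in> {1..J} \<Longrightarrow> \<exists>a b. \<forall>x\<in>{node J (j-1)..node J j}. f x = a + b * x"
  unfolding Vh_def by blast
lemma Vh_cont: "f \<in> Vh J per \<Longrightarrow> continuous_on {0..1} f"
  unfolding Vh_def by blast
lemma Vh_per: "f \<in> Vh J per \<Longrightarrow> per \<Longrightarrow> f 0 = f 1"
  unfolding Vh_def by blast
lemma Vh_I: "continuous_on {0..1} f \<Longrightarrow> (\<And>j. j \<in> {1..J} \<Longrightarrow> \<exists>a b. \<forall>x\<in>{node J (j-1)..node J j}. f x = a + b * x)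
   \<Longrightarrow> (per \<Longrightarrow> f 0 = f 1) \<Longrightarrow> f \<in> Vh J per"
  unfolding Vh_def by blast

lemma Vh_const: "(\<lambda>x. c) \<in> Vh J per"
proof (rule Vh_I)
  fix j show "\<exists>a b. \<forall>x\<in>{node J (j-1)..node J j}. c = a + b * x"
    by (rule exI[of _ c], rule exI[of _ 0]) simp
qed auto

lemma Vh_add: "f \<in> Vh J per \<Longrightarrow> g \<in> Vh J per \<Longrightarrow> (\<lambda>x. f x + g x) \<in> Vh J per"
proof (rule Vh_I)
  fix j assume f: "f \<in> Vh J per" and g: "g \<in> Vh J per" and j: "j \<in> {1..J}"
  obtain a b where ab: "\<forall>x\<in>{node J (j-1)..node J j}. f x = a + b * x" using Vh_affine[OF f j] by blast
  obtain c d where cd: "\<forall>x\<in>{node J (j-1)..node J j}. g x = c + d * x" using Vh_affine[OF g j] by blast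
  show "\<exists>a b. \<forall>x\<in>{node J (j-1)..node J j}. f x + g x = a + b * x"
    using ab cd by (intro exI[of _ "a + c"] exI[of _ "b + d"]) (auto simp: algebra_simps)
qed (auto simp: Vh_per intro: continuous_on_add Vh_cont)

lemma Vh_scale: "f \<in> Vh J per \<Longrightarrow> (\<lambda>x. c * f x) \<in> Vh J per"
proof (rule Vh_I)
  fix j assume f: "f \<in> Vh J per" and j: "j \<in> {1..J}"
  obtain a b where ab: "\<forall>x\<in>{node J (j-1)..node J j}. f x = a + b * x" using Vh_affine[OF f j] by blast
  show "\<exists>a b. \<forall>x\<in>{node J (j-1)..node J j}. c * f x = a + b * x"
    using ab by (intro exI[of _ "c * a"] exI[of _ "c * b"]) (auto simp: algebra_simps)
qed (auto simp: Vh_per intro: continuous_on_mult continuous_on_const Vh_cont)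

lemma Vh_sum: "finite L \<Longrightarrow> (\<And>l. l \<in> L \<Longrightarrow> f l \<in> Vh J per) \<Longrightarrow> (\<lambda>x. \<Sum>l\<in>L. f l x) \<in> Vh J per"
proof (induction L rule: finite_induct)
  case empty then show ?case using Vh_const[of 0] by simp
next
  case (insert a F) then show ?case using Vh_add[of "f a" J per "\<lambda>x. \<Sum>l\<in>F. f l x"] by simp
qed

lemma Vh_diff: "f \<in> Vh J per \<Longrightarrow> g \<in> Vh J per \<Longrightarrow> (\<lambda>x. f x - g x) \<in> Vh J per"
  using Vh_add[of f J per "\<lambda>x. (-1) * g x"] Vh_scale[of g J per "-1"] by simp

lemma VVh_iff: "X \<in> VVh J per \<longleftrightarrow> (\<lambda>x. fst (X x)) \<in> Vh J per \<and> (\<lambda>x. snd (X x)) \<in> Vh J per"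
  by (simp add: VVh_def inner_e1 inner_e2)

lemma VVh_affine:
  assumes "X \<in> VVh J per" "j \<in> {1..J}"
  shows "\<exists>A B. \<forall>x\<in>{node J (j-1)..node J j}. X x = A + x *\<^sub>R B"
proof -
  obtain a b where ab: "\<forall>x\<in>{node J (j-1)..node J j}. fst (X x) = a + b * x"
    using Vh_affine[of "\<lambda>x. fst (X x)" J per j] assms by (auto simp: VVh_iff)
  obtain c d where cd: "\<forall>x\<in>{node J (j-1)..node J j}. snd (X x) = c + d * x"
    using Vh_affine[of "\<lambda>x. snd (X x)" J per j] assms by (auto simp: VVh_iff)
  show ?thesis using ab cd by (intro exI[of _ "(a,c)"] exI[of _ "(b,d)"]) (auto simp: prod_eq_iff)
qed

lemma VVh_cont: "X \<in> VVh J per \<Longrightarrow> continuous_on {0..1} X"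
proof -
  assume "X \<in> VVh J per"
  then have "continuous_on {0..1} (\<lambda>x. (fst (X x), snd (X x)))"
    by (intro continuous_on_Pair) (auto simp: VVh_iff intro: Vh_cont)
  then show ?thesis by simp
qed

lemma VVh_zero: "(\<lambda>x. 0) \<in> VVh J per"
  using Vh_const[of 0] by (simp add: VVh_iff)

lemma VVh_add: "X \<in> VVh J per \<Longrightarrow> Y \<in> VVh J per \<Longrightarrow> (\<lambda>x. X x + Y x) \<in> VVh J per"
  by (simp add: VVh_iff Vh_add)

lemma VVh_scale: "X \<in> VVh J per \<Longrightarrow> (\<lambda>x. c *\<^sub>R X x) \<in> VVh J per"
  by (simp add: VVh_iff Vh_scale)

lemma VVh_diff: "X \<in> VVh J per \<Longrightarrow> Y \<in> VVh J per \<Longrightarrow> (\<lambda>x. X x - Y x) \<in> VVh J per"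
  by (simp add: VVh_iff Vh_diff)

lemma VVh_sum: "finite L \<Longrightarrow> (\<And>l. l \<in> L \<Longrightarrow> X l \<in> VVh J per) \<Longrightarrow> (\<lambda>x. \<Sum>l\<in>L. X l x) \<in> VVh J per"
proof (induction L rule: finite_induct)
  case empty then show ?case using VVh_zero by simp
next
  case (insert a F) then show ?case using VVh_add[of "X a" J per "\<lambda>x. \<Sum>l\<in>F. X l x"] by simp
qed

lemma VVh_fun_vec: "f \<in> Vh J per \<Longrightarrow> (\<lambda>x. f x *\<^sub>R v) \<in> VVh J per"
  using Vh_scale[of f J per "fst v"] Vh_scale[of f J per "snd v"] by (simp add: VVh_iff mult.commute)

lemma VVh_pw: "J > 0 \<Longrightarrow> X \<in> VVh J per \<Longrightarrow> pw J X"
  by (rule pw_cont) (auto intro: VVh_cont)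

lemma Vh_pw: "J > 0 \<Longrightarrow> f \<in> Vh J per \<Longrightarrow> pw J f"
  by (rule pw_cont) (auto intro: Vh_cont)

lemma VVh_elem:
  assumes J: "J > 0" and X: "X \<in> VVh J per" and j: "j \<in> {1..J}"
  shows "\<exists>A B. (\<forall>x\<in>{node J (j-1)..node J j}. X x = A + x *\<^sub>R B) \<and>
     (\<forall>x\<in>{node J (j-1)<..<node J j}. (X has_vector_derivative B) (at x) \<and> drho X x = B)"
proof -
  obtain A B where AB: "\<forall>x\<in>{node J (j-1)..node J j}. X x = A + x *\<^sub>R B" using VVh_affine[OF X j] by blast
  have "(X has_vector_derivative B) (at x)" if x: "x \<in> {node J (j-1)<..<node J j}" for x
  proof -
    have "((\<lambda>y. A + y *\<^sub>R B) has_vector_derivative B) (at x)"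
      by (auto intro!: derivative_eq_intros)
    then show ?thesis
      by (rule has_vector_derivative_transform_within_open[of _ _ _ "{node J (j-1)<..<node J j}"])
         (use x AB in auto)
  qed
  then show ?thesis using AB unfolding drho_def
    by (intro exI[of _ A] exI[of _ B]) (auto intro: vector_derivative_at)
qed

lemma VVh_hvd:
  assumes J: "J > 0" and X: "X \<in> VVh J per" and x: "x \<in> {0..1} - nodes J"
  shows "(X has_vector_derivative drho X x) (at x)"
proof -
  obtain j where j: "j \<in> {1..J}" "x \<in> {node J (j-1)<..<node J j}" using elem_cover[OF J] x by blast
  then show ?thesis using VVh_elem[OF J X j(1)] by auto
qed

lemma drho_pw: assumes J: "J > 0" and X: "X \<in> VVh J per" shows "pw J (drho X)"
proof (rule pw_locconst)
  fix j assume j: "j \<in> {1..J}"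
  obtain A B where "\<forall>x\<in>{node J (j-1)<..<node J j}. (X has_vector_derivative B) (at x) \<and> drho X x = B"
    using VVh_elem[OF J X j] by blast
  then show "\<exists>v. \<forall>x\<in>{node J (j-1)<..<node J j}. drho X x = v" by blast
qed

lemma drho_local:
  assumes eq: "\<forall>y\<in>{0<..<1}. X y = Y y" and x: "x \<in> {0<..<1}"
  shows "drho X x = drho Y x"
proof -
  have "(X has_vector_derivative f') (at x) \<longleftrightarrow> (Y has_vector_derivative f') (at x)" for f'
    using has_vector_derivative_transform_within_open[of X f' x "{0<..<1}" Y]
      has_vector_derivative_transform_within_open[of Y f' x "{0<..<1}" X] eq x by auto
  then show ?thesis unfolding drho_def vector_derivative_def by simp
qed

lemma nodes_01: "J > 0 \<Longrightarrow> x \<in> {0..1} - nodes J \<Longrightarrow> x \<in> {0<..<1}"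
proof -
  assume J: "J > 0" and x: "x \<in> {0..1} - nodes J"
  have "0 \<in> nodes J" "1 \<in> nodes J" using J unfolding nodes_def
    by (metis atMost_iff image_eqI le0 node_0, metis atMost_iff image_eqI order_refl node_J)
  then show ?thesis using x by (auto simp: less_le)
qed

lemma drho_lin:
  assumes J: "J > 0" and L: "finite L" and X: "\<And>l. l \<in> L \<Longrightarrow> X l \<in> VVh J per"
    and x: "x \<in> {0..1} - nodes J"
  shows "drho (\<lambda>y. \<Sum>l\<in>L. c l *\<^sub>R X l y) x = (\<Sum>l\<in>L. c l *\<^sub>R drho (X l) x)"
proof -
  have "((\<lambda>y. \<Sum>l\<in>L. c l *\<^sub>R X l y) has_vector_derivative (\<Sum>l\<in>L. c l *\<^sub>R drho (X l) x)) (at x)"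
    by (intro has_vector_derivative_sum bounded_linear.has_vector_derivative[OF bounded_linear_scaleR_right] VVh_hvd[OF J X x])
  then show ?thesis unfolding drho_def by (rule vector_derivative_at)
qed

lemma drho_add:
  assumes J: "J > 0" and X: "X \<in> VVh J per" "Y \<in> VVh J per" and x: "x \<in> {0..1} - nodes J"
  shows "drho (\<lambda>y. X y + Y y) x = drho X x + drho Y x"
    "drho (\<lambda>y. X y - Y y) x = drho X x - drho Y x"
proof -
  show "drho (\<lambda>y. X y + Y y) x = drho X x + drho Y x"
    unfolding drho_def
    by (rule vector_derivative_at, intro has_vector_derivative_add)
       (use VVh_hvd[OF J X(1) x] VVh_hvd[OF J X(2) x] in \<open>auto simp: drho_def\<close>)
  show "drho (\<lambda>y. X y - Y y) x = drho X x - drho Y x"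
    unfolding drho_def
    by (rule vector_derivative_at, intro has_vector_derivative_diff)
       (use VVh_hvd[OF J X(1) x] VVh_hvd[OF J X(2) x] in \<open>auto simp: drho_def\<close>)
qed

lemma drho_zero: "drho (\<lambda>y. 0) x = 0"
  unfolding drho_def by (rule vector_derivative_at) (rule has_vector_derivative_const)


definition hat :: "nat \<Rightarrow> nat \<Rightarrow> real \<Rightarrow> real" where
  "hat J i x = max 0 (1 - \<bar>real J * x - real i\<bar>)"

definition hatp :: "nat \<Rightarrow> bool \<Rightarrow> nat \<Rightarrow> real \<Rightarrow> real" where
  "hatp J per i x = hat J i x + (if per \<and> i = 0 then hat J J x else 0)"

definition nM :: "nat \<Rightarrow> bool \<Rightarrow> nat" where "nM J per = (if per then J else Suc J)"

lemma hat_node: "J > 0 \<Longrightarrow> hat J i (node J l) = (if i = l then 1 else 0)"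
proof -
  assume J: "J > 0"
  have e: "real J * node J l = real l" using J by (simp add: node_def)
  show ?thesis
  proof (cases "i = l")
    case False
    then have "1 \<le> \<bar>real l - real i\<bar>" by linarith
    then show ?thesis using False by (simp add: hat_def e)
  qed (simp add: hat_def e)
qed

lemma hat_elem:
  assumes J: "J > 0" and j: "j \<in> {1..J}" and x: "x \<in> {node J (j-1)..node J j}"
  shows "hat J i x = (if i = j - 1 then real j - real J * x else if i = j then real J * x - real j + 1 else 0)"
proof -
  have jr: "real (j - 1) = real j - 1" using j by auto
  have t: "real j - 1 \<le> real J * x" "real J * x \<le> real j"
    using x J jr by (auto simp: node_def field_simps)
  consider "i = j - 1" | "i = j" | "i < j - 1" | "i > j" by linarith
  then show ?thesis
  proof cases
    case 1 then show ?thesis using t jr j by (auto simp: hat_def)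
  next
    case 2 then show ?thesis using t j by (auto simp: hat_def)
  next
    case 3
    then have "real i \<le> real j - 2" using j by linarith
    then show ?thesis using t 3 by (auto simp: hat_def)
  next
    case 4
    then have "real j + 1 \<le> real i" by linarith
    then show ?thesis using t 4 by (auto simp: hat_def)
  qed
qed

lemma hat_Vh: assumes J: "J > 0" shows "hat J i \<in> Vh J False"
proof (rule Vh_I)
  show "continuous_on {0..1} (hat J i)" unfolding hat_def by (intro continuous_intros)
next
  fix j assume j: "j \<in> {1..J}"
  show "\<exists>a b. \<forall>x\<in>{node J (j-1)..node J j}. hat J i x = a + b * x"
  proof (cases "i = j - 1")
    case True then show ?thesis using hat_elem[OF J j]
      by (intro exI[of _ "real j"] exI[of _ "- real J"]) auto
  next
    case False
    show ?thesis
    proof (cases "i = j")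
      case True then show ?thesis using hat_elem[OF J j] False
        by (intro exI[of _ "1 - real j"] exI[of _ "real J"]) auto
    next
      case False2: False
      then show ?thesis using hat_elem[OF J j] False
        by (intro exI[of _ 0] exI[of _ 0]) auto
    qed
  qed
qed simp

lemma hat_0: "J > 0 \<Longrightarrow> hat J i 0 = (if i = 0 then 1 else 0)"
  using hat_node[of J i 0] by simp
lemma hat_1: "J > 0 \<Longrightarrow> hat J i 1 = (if i = J then 1 else 0)"
  using hat_node[of J i J] by simp

lemma hatp_Vh: assumes J: "J > 0" and i: "i < nM J per" shows "hatp J per i \<in> Vh J per"
proof (cases per)
  case False
  then show ?thesis using hat_Vh[OF J, of i] by (simp add: hatp_def[abs_def])
next
  case True
  have iJ: "i < J" using i True by (simp add: nM_def)
  have v: "hatp J per i \<in> Vh J False"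
    using Vh_add[OF hat_Vh[OF J, of i] hat_Vh[OF J, of J]] hat_Vh[OF J, of i] Vh_const[of 0]
    unfolding hatp_def[abs_def] using True by (cases "i = 0") auto
  have "hatp J per i 0 = hatp J per i 1"
    using J iJ True by (auto simp: hatp_def hat_0 hat_1)
  then show ?thesis using v unfolding Vh_def by auto
qed

lemma hatp_node:
  assumes J: "J > 0" and i: "i < nM J per" and l: "l < nM J per"
  shows "hatp J per i (node J l) = (if i = l then 1 else 0)"
  using assms by (auto simp: hatp_def hat_node nM_def split: if_splits)

lemma hatp_bdry:
  assumes J: "J > 0" and np: "\<not> per" and \<rho>: "\<rho> \<in> {0, 1}" and i: "i < nM J per"
    and nz: "hatp J per i \<rho> \<noteq> 0"
  shows "\<rho> = node J i"
  using assms by (auto simp: hatp_def hat_0 hat_1 nM_def split: if_splits)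

lemma Vh_interp_hat:
  assumes J: "J > 0" and f: "f \<in> Vh J per" and x: "x \<in> {0..1}"
  shows "f x = (\<Sum>i\<le>J. f (node J i) * hat J i x)"
proof -
  obtain j where j: "j \<in> {1..J}" "x \<in> {node J (j-1)..node J j}" using elem_cover_closed[OF J x] by blast
  obtain a b where ab: "\<forall>y\<in>{node J (j-1)..node J j}. f y = a + b * y" using Vh_affine[OF f j(1)] by blast
  have jn: "j - 1 \<noteq> j" using j by auto
  have n1: "node J (j-1) \<in> {node J (j-1)..node J j}" "node J j \<in> {node J (j-1)..node J j}"
    using node_le[OF J, of "j-1" j] by auto
  have "(\<Sum>i\<le>J. f (node J i) * hat J i x) =
        (\<Sum>i\<le>J. (if i = j - 1 then f (node J (j-1)) * (real j - real J * x) else 0) +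
                 (if i = j then f (node J j) * (real J * x - real j + 1) else 0))"
    by (intro sum.cong refl) (use hat_elem[OF J j] jn in auto)
  also have "\<dots> = f (node J (j-1)) * (real j - real J * x) + f (node J j) * (real J * x - real j + 1)"
    using j by (simp add: sum.distrib) (use j in linarith)
  also have "\<dots> = (a + b * (real (j-1) / real J)) * (real j - real J * x) + (a + b * (real j / real J)) * (real J * x - real j + 1)"
    using ab n1 by (simp add: node_def)
  also have "\<dots> = a + b * x"
    using J j by (simp add: of_nat_diff field_simps)
  also have "\<dots> = f x" using ab j by simp
  finally show ?thesis by simp
qed

lemma Vh_interp:
  assumes J: "J > 0" and f: "f \<in> Vh J per" and x: "x \<in> {0..1}"
  shows "f x = (\<Sum>i<nM J per. f (node J i) * hatp J per i x)"
proof (cases per)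
  case False
  then show ?thesis using Vh_interp_hat[OF J f x] by (simp add: nM_def hatp_def lessThan_Suc_atMost)
next
  case True
  have fJ: "f (node J J) = f (node J 0)" using Vh_per[OF f True] J by simp
  have "(\<Sum>i<nM J per. f (node J i) * hatp J per i x) =
        (\<Sum>i<J. f (node J i) * hat J i x) + f (node J 0) * hat J J x"
  proof -
    have "(\<Sum>i<nM J per. f (node J i) * hatp J per i x) =
        (\<Sum>i<J. f (node J i) * hat J i x + (if i = 0 then f (node J 0) * hat J J x else 0))"
      by (intro sum.cong) (auto simp: hatp_def nM_def True distrib_left)
    also have "\<dots> = (\<Sum>i<J. f (node J i) * hat J i x) + f (node J 0) * hat J J x"
      using J by (simp add: sum.distrib)
    finally show ?thesis .
  qed
  also have "\<dots> = (\<Sum>i\<le>J. f (node J i) * hat J i x)"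
    using fJ by (simp add: lessThan_Suc_atMost[symmetric])
  finally show ?thesis using Vh_interp_hat[OF J f x] by simp
qed

lemma VVh_interp:
  assumes J: "J > 0" and X: "X \<in> VVh J per" and x: "x \<in> {0..1}"
  shows "X x = (\<Sum>i<nM J per. hatp J per i x *\<^sub>R X (node J i))"
proof (rule prod_eqI)
  have "fst (X x) = (\<Sum>i<nM J per. fst (X (node J i)) * hatp J per i x)"
    using Vh_interp[OF J _ x, of "\<lambda>y. fst (X y)"] X by (simp add: VVh_iff)
  then show "fst (X x) = fst (\<Sum>i<nM J per. hatp J per i x *\<^sub>R X (node J i))"
    by (simp add: fst_sum mult.commute)
  have "snd (X x) = (\<Sum>i<nM J per. snd (X (node J i)) * hatp J per i x)"
    using Vh_interp[OF J _ x, of "\<lambda>y. snd (X y)"] X by (simp add: VVh_iff)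
  then show "snd (X x) = snd (\<Sum>i<nM J per. hatp J per i x *\<^sub>R X (node J i))"
    by (simp add: snd_sum mult.commute)
qed


lemma pw_divc: "pw J f \<Longrightarrow> pw J (\<lambda>x. f x / (c::real))"
  using pw_mult[OF _ pw_const, of J f "1/c"] by simp

lemmas pw_intros = pw_add pw_diff pw_mult pw_scaleR pw_inner pw_const pw_divc

lemma Isharp_add:
  assumes J: "J > 0" and P: "pw J P" "pw J Q" and eq: "\<forall>x\<in>{0..1} - nodes J. R x = P x + Q x"
  shows "Isharp lumped J R = Isharp lumped J P + Isharp lumped J Q"
  using Isharp_lincomb[OF J, of "{0::nat,1}" "\<lambda>l. if l = 0 then P else Q" R "\<lambda>_. 1" lumped] P eq by simp

lemma Isharp_diff:
  assumes J: "J > 0" and P: "pw J P" "pw J Q" and eq: "\<forall>x\<in>{0..1} - nodes J. R x = P x - Q x"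
  shows "Isharp lumped J R = Isharp lumped J P - Isharp lumped J Q"
  using Isharp_lincomb[OF J, of "{0::nat,1}" "\<lambda>l. if l = 0 then P else Q" R "\<lambda>l. if l = 0 then 1 else -1" lumped] P eq by simp

lemma Isharp_scale:
  assumes J: "J > 0" and P: "pw J P" and eq: "\<forall>x\<in>{0..1} - nodes J. R x = c * P x"
  shows "Isharp lumped J R = c * Isharp lumped J P"
  using Isharp_lincomb[OF J, of "{0::nat}" "\<lambda>l. P" R "\<lambda>_. c" lumped] P eq by simp

lemma Isharp_zero:
  assumes J: "J > 0" and eq: "\<forall>x\<in>{0..1} - nodes J. R x = 0"
  shows "Isharp lumped J R = 0"
  using Isharp_lincomb[OF J, of "{}" "\<lambda>l. R" R "\<lambda>_. 0" lumped] eq by simp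

lemma VVh_d_VVh: "X \<in> VVh_d J per PD P0 P1 P2 \<Longrightarrow> X \<in> VVh J per"
  by (simp add: VVh_d_def VVh_d0_def)

lemma WW_VVh: "K \<in> WW_sharp lumped J per P0 \<Longrightarrow> K \<in> VVh J per"
  by (auto simp: WW_sharp_def W_sharp_def VVh_def Wh_d0_def split: if_splits)

lemma VVh_d_lincomb:
  assumes "finite L" "\<And>l. l \<in> L \<Longrightarrow> c l = 0 \<or> X l \<in> VVh_d J per PD P0 P1 P2"
  shows "(\<lambda>x. \<Sum>l\<in>L. c l *\<^sub>R X l x) \<in> VVh_d J per PD P0 P1 P2"
proof -
  have V: "(\<lambda>x. \<Sum>l\<in>L. c l *\<^sub>R X l x) \<in> VVh J per"
  proof (rule VVh_sum[OF assms(1)])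
    fix l assume l: "l \<in> L"
    show "(\<lambda>x. c l *\<^sub>R X l x) \<in> VVh J per"
      using assms(2)[OF l] VVh_zero VVh_scale[OF VVh_d_VVh] by auto
  qed
  have z: "\<And>l \<rho>. l \<in> L \<Longrightarrow> \<rho> \<in> P0 \<union> P1 \<Longrightarrow> (c l *\<^sub>R X l \<rho>) \<bullet> e1 = 0"
    "\<And>l \<rho>. l \<in> L \<Longrightarrow> \<rho> \<in> P2 \<Longrightarrow> (c l *\<^sub>R X l \<rho>) \<bullet> e2 = 0"
    "\<And>l \<rho>. l \<in> L \<Longrightarrow> \<rho> \<in> PD \<Longrightarrow> c l *\<^sub>R X l \<rho> = 0"
    using assms(2) by (fastforce simp: VVh_d_def VVh_d0_def)+
  show ?thesis using V z
    by (auto simp: VVh_d_def VVh_d0_def inner_sum_left intro!: sum.neutral)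
qed

lemma W_sharp_lincomb:
  assumes L: "finite L" and f: "\<And>l. l \<in> L \<Longrightarrow> c l = 0 \<or> f l \<in> W_sharp lumped J per P0"
  shows "(\<lambda>x. \<Sum>l\<in>L. c l * f l x) \<in> W_sharp lumped J per P0"
proof -
  have V: "f l \<in> Vh J per" if "f l \<in> W_sharp lumped J per P0" for l
    using that by (auto simp: W_sharp_def Wh_d0_def split: if_splits)
  have S: "(\<lambda>x. \<Sum>l\<in>L. c l * f l x) \<in> Vh J per"
  proof (rule Vh_sum[OF L])
    fix l assume l: "l \<in> L"
    show "(\<lambda>x. c l * f l x) \<in> Vh J per"
      using f[OF l] V Vh_scale[of "f l" J per "c l"] Vh_const[of 0 J per] by auto
  qed
  show ?thesis
  proof (cases lumped)
    case False then show ?thesis using S by (simp add: W_sharp_def)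
  next
    case True
    have "\<forall>\<rho>\<in>P0. (\<Sum>l\<in>L. c l * f l \<rho>) = 0"
    proof
      fix \<rho> assume \<rho>: "\<rho> \<in> P0"
      show "(\<Sum>l\<in>L. c l * f l \<rho>) = 0"
      proof (rule sum.neutral, rule ballI)
        fix l assume l: "l \<in> L"
        show "c l * f l \<rho> = 0" using f[OF l] \<rho> True by (auto simp: W_sharp_def Wh_d0_def)
      qed
    qed
    then show ?thesis using S True by (simp add: W_sharp_def Wh_d0_def)
  qed
qed

lemma WW_lincomb:
  assumes L: "finite L" and K: "\<And>l. l \<in> L \<Longrightarrow> c l = 0 \<or> K l \<in> WW_sharp lumped J per P0"
  shows "(\<lambda>x. \<Sum>l\<in>L. c l *\<^sub>R K l x) \<in> WW_sharp lumped J per P0"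
proof -
  have "(\<lambda>x. \<Sum>l\<in>L. c l * (K l x \<bullet> e1)) \<in> W_sharp lumped J per P0"
    by (rule W_sharp_lincomb[OF L]) (use K in \<open>auto simp: WW_sharp_def\<close>)
  moreover have "(\<lambda>x. \<Sum>l\<in>L. c l * (K l x \<bullet> e2)) \<in> W_sharp lumped J per P0"
    by (rule W_sharp_lincomb[OF L]) (use K in \<open>auto simp: WW_sharp_def\<close>)
  ultimately show ?thesis by (simp add: WW_sharp_def inner_sum_left)
qed

locale scm =
  fixes lumped per :: bool and J :: nat and PD P0 P1 P2 :: "real set"
    and rh :: "real \<Rightarrow> real" and dt :: real and Xm :: "real \<Rightarrow> real \<times> real"
  assumes J3: "J \<ge> 3"
    and bp: "boundary_partition per PD P0 P1 P2"
    and XmD: "Xm \<in> VVh_d0 J per P0"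
    and ae: "AE x in lborel. x \<in> {0<..<1} \<longrightarrow> norm (drho Xm x) > 0"
    and pos: "\<forall>\<rho>\<in>{0..1} - P0. Xm \<rho> \<bullet> e1 > 0"
    and dt: "dt > 0"
begin

lemma J0: "J > 0" using J3 by simp

lemma XmV: "Xm \<in> VVh J per" using XmD by (simp add: VVh_d0_def)

lemma Psub: "PD \<subseteq> {0,1}" "P0 \<subseteq> {0,1}" "P1 \<subseteq> {0,1}" "P2 \<subseteq> {0,1}"
  using bp by (auto simp: boundary_partition_def bdry_def split: if_splits)

lemma Pper: "per \<Longrightarrow> PD = {} \<and> P0 = {} \<and> P1 = {} \<and> P2 = {}"
  using bp by (auto simp: boundary_partition_def bdry_def)

lemma finP: "finite PD" "finite P0" "finite P1" "finite P2"
  using Psub by (auto intro: finite_subset)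

definition xe :: "real \<Rightarrow> real" where "xe x = Xm x \<bullet> e1"
definition nr :: "real \<Rightarrow> real" where "nr x = norm (drho Xm x)"

lemma xe_pos: "x \<in> {0<..<1} \<Longrightarrow> xe x > 0"
  using pos Psub(2) by (auto simp: xe_def)

lemma xe_nn: "x \<in> {0..1} \<Longrightarrow> xe x \<ge> 0"
proof -
  assume x: "x \<in> {0..1}"
  show ?thesis
  proof (cases "x \<in> P0")
    case True then show ?thesis using XmD by (auto simp: xe_def VVh_d0_def)
  next
    case False then show ?thesis using pos x by (auto simp: xe_def less_imp_le)
  qed
qed

lemma xe_cont: "continuous_on {0..1} xe"
  unfolding xe_def by (intro continuous_intros VVh_cont[OF XmV])

lemma xe_pw: "pw J xe" by (rule pw_cont[OF J0 xe_cont])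

lemma slope:
  assumes j: "j \<in> {1..J}"
  shows "\<exists>w. w \<noteq> 0 \<and> (\<forall>x\<in>{node J (j-1)<..<node J j}. drho Xm x = w)"
proof -
  obtain A B where AB: "\<forall>x\<in>{node J (j-1)<..<node J j}. (Xm has_vector_derivative B) (at x) \<and> drho Xm x = B"
    using VVh_elem[OF J0 XmV j] by blast
  have "B \<noteq> 0"
  proof
    assume B0: "B = 0"
    let ?S = "{node J (j-1)<..<node J j}"
    have sub: "?S \<subseteq> {0<..<1}"
      using nodes_01[OF J0] open_elem_not_node[OF J0 j] by blast
    have "AE x in lborel. x \<notin> ?S"
      using ae by eventually_elim (use AB B0 sub in auto)
    then have "?S \<in> null_sets lborel" by (subst AE_iff_null_sets) auto
    then have "emeasure lborel ?S = 0" by auto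
    moreover have "node J (j-1) < node J j" using node_less[OF J0, of "j-1" j] j by auto
    ultimately show False by simp
  qed
  then show ?thesis using AB by blast
qed

lemma nr_elem:
  assumes j: "j \<in> {1..J}"
  obtains w where "w \<noteq> 0" "\<forall>x\<in>{node J (j-1)<..<node J j}. drho Xm x = w \<and> nr x = norm w"
  using slope[OF j] unfolding nr_def by auto

lemma nr_pw: "pw J nr"
  by (rule pw_locconst) (metis nr_elem)

lemma inv_nr_pw: "pw J (\<lambda>x. inverse (nr x))"
  by (rule pw_locconst) (metis nr_elem)

lemma nr_pos: "x \<in> {0..1} - nodes J \<Longrightarrow> nr x > 0"
proof -
  assume x: "x \<in> {0..1} - nodes J"
  obtain j where j: "j \<in> {1..J}" "x \<in> {node J (j-1)<..<node J j}" using elem_cover[OF J0] x by blast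
  obtain w where "w \<noteq> 0" "\<forall>x\<in>{node J (j-1)<..<node J j}. drho Xm x = w \<and> nr x = norm w"
    using nr_elem[OF j(1)] by blast
  then show ?thesis using j by auto
qed

definition W1 :: "(real \<Rightarrow> real \<times> real) \<Rightarrow> (real \<Rightarrow> real \<times> real) \<Rightarrow> real \<Rightarrow> real \<times> real" where
  "W1 \<delta> \<kappa> x = (xe x / dt * nr x) *\<^sub>R \<delta> x - (xe x * nr x) *\<^sub>R \<kappa> x"

definition H1 where "H1 \<delta> \<kappa> ch = Isharp lumped J (\<lambda>x. W1 \<delta> \<kappa> x \<bullet> ch x)"

definition H2 where "H2 \<delta> \<kappa> \<eta> = Isharp lumped J (\<lambda>x. ((xe x * nr x) *\<^sub>R \<kappa> x) \<bullet> \<eta> x)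
   + Isharp False J (\<lambda>x. ((xe x * inverse (nr x)) *\<^sub>R drho \<delta> x) \<bullet> drho \<eta> x)"

definition Rz where "Rz \<eta> = Isharp False J (\<lambda>x. (nr x *\<^sub>R e1) \<bullet> \<eta> x)
   + Isharp False J (\<lambda>x. ((xe x * inverse (nr x)) *\<^sub>R drho Xm x) \<bullet> drho \<eta> x)
   + ((\<Sum>p\<in>P1. rh p * (Xm p \<bullet> e1) * (\<eta> p \<bullet> e2)) + (\<Sum>p\<in>P2. rh p * (Xm p \<bullet> e1) * (\<eta> p \<bullet> e1)))"

lemmas pwb = xe_pw nr_pw inv_nr_pw VVh_pw[OF J0] drho_pw[OF J0]

lemma scheme_iff:
  assumes dX: "dX \<in> VVh J per" and K: "K \<in> VVh J per"
  shows "scheme_eqs lumped J per PD P0 P1 P2 rh dt Xm dX K \<longleftrightarrow>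
    (\<forall>ch\<in>WW_sharp lumped J per P0. H1 dX K ch = 0) \<and>
    (\<forall>\<eta>\<in>VVh_d J per PD P0 P1 P2. H2 dX K \<eta> + Rz \<eta> = 0)"
proof -
  have e1: "Isharp lumped J (\<lambda>x. ((Xm x \<bullet> e1 / dt) *\<^sub>R (Xm x + dX x - Xm x)) \<bullet> (norm (drho Xm x) *\<^sub>R ch x))
     = Isharp lumped J (\<lambda>x. ((Xm x \<bullet> e1) *\<^sub>R K x) \<bullet> (norm (drho Xm x) *\<^sub>R ch x))
     \<longleftrightarrow> H1 dX K ch = 0" if ch: "ch \<in> VVh J per" for ch
  proof -
    have "H1 dX K ch = Isharp lumped J (\<lambda>x. ((Xm x \<bullet> e1 / dt) *\<^sub>R (Xm x + dX x - Xm x)) \<bullet> (norm (drho Xm x) *\<^sub>R ch x))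
       - Isharp lumped J (\<lambda>x. ((Xm x \<bullet> e1) *\<^sub>R K x) \<bullet> (norm (drho Xm x) *\<^sub>R ch x))"
      unfolding H1_def
      by (rule Isharp_diff[OF J0])
        (auto simp: W1_def xe_def nr_def inner_diff_left algebra_simps
          intro!: pw_intros pwb dX K ch XmV pw_add[OF VVh_pw[OF J0 XmV] VVh_pw[OF J0 dX]]
          simp flip: nr_def xe_def)
    then show ?thesis by simp
  qed
  have e2: "Isharp lumped J (\<lambda>x. ((Xm x \<bullet> e1) *\<^sub>R K x) \<bullet> (norm (drho Xm x) *\<^sub>R \<eta> x))
        + integral {0..1} (\<lambda>x. (\<eta> x \<bullet> e1) * norm (drho Xm x))
        + integral {0..1} (\<lambda>x. ((Xm x \<bullet> e1) *\<^sub>R drho (\<lambda>x. Xm x + dX x) x) \<bullet> (inverse (norm (drho Xm x)) *\<^sub>R drho \<eta> x))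
      = - ((\<Sum>p\<in>P1. rh p * (Xm p \<bullet> e1) * (\<eta> p \<bullet> e2)) + (\<Sum>p\<in>P2. rh p * (Xm p \<bullet> e1) * (\<eta> p \<bullet> e1)))
      \<longleftrightarrow> H2 dX K \<eta> + Rz \<eta> = 0" if \<eta>: "\<eta> \<in> VVh J per" for \<eta>
  proof -
    have a: "Isharp lumped J (\<lambda>x. ((Xm x \<bullet> e1) *\<^sub>R K x) \<bullet> (norm (drho Xm x) *\<^sub>R \<eta> x))
       = Isharp lumped J (\<lambda>x. ((xe x * nr x) *\<^sub>R K x) \<bullet> \<eta> x)"
      by (rule Isharp_cong[OF J0]) (auto simp: xe_def nr_def)
    have b: "integral {0..1} (\<lambda>x. (\<eta> x \<bullet> e1) * norm (drho Xm x)) = Isharp False J (\<lambda>x. (nr x *\<^sub>R e1) \<bullet> \<eta> x)"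
      by (simp add: Isharp_def nr_def inner_commute mult.commute)
    have c: "integral {0..1} (\<lambda>x. ((Xm x \<bullet> e1) *\<^sub>R drho (\<lambda>x. Xm x + dX x) x) \<bullet> (inverse (norm (drho Xm x)) *\<^sub>R drho \<eta> x))
      = Isharp False J (\<lambda>x. ((xe x * inverse (nr x)) *\<^sub>R drho dX x) \<bullet> drho \<eta> x)
        + Isharp False J (\<lambda>x. ((xe x * inverse (nr x)) *\<^sub>R drho Xm x) \<bullet> drho \<eta> x)"
    proof -
      have "integral {0..1} (\<lambda>x. ((Xm x \<bullet> e1) *\<^sub>R drho (\<lambda>x. Xm x + dX x) x) \<bullet> (inverse (norm (drho Xm x)) *\<^sub>R drho \<eta> x))
        = Isharp False J (\<lambda>x. ((xe x) *\<^sub>R drho (\<lambda>x. Xm x + dX x) x) \<bullet> (inverse (nr x) *\<^sub>R drho \<eta> x))"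
        by (simp add: Isharp_def xe_def nr_def)
      also have "\<dots> = Isharp False J (\<lambda>x. ((xe x * inverse (nr x)) *\<^sub>R drho dX x) \<bullet> drho \<eta> x)
        + Isharp False J (\<lambda>x. ((xe x * inverse (nr x)) *\<^sub>R drho Xm x) \<bullet> drho \<eta> x)"
        by (rule Isharp_add[OF J0])
          (auto simp: drho_add[OF J0 XmV dX] inner_add_left algebra_simps intro!: pw_intros pwb dX \<eta> XmV)
      finally show ?thesis .
    qed
    show ?thesis unfolding a b c H2_def Rz_def by (auto simp: algebra_simps)
  qed
  show ?thesis
    unfolding scheme_eqs_def Let_def ip_sharp_Isharp
    using e1 e2 WW_VVh VVh_d_VVh by simp
qed

end


lemma Isharp_lin2:
  assumes J: "J > 0" and P: "pw J P" "pw J Q" and eq: "\<forall>x\<in>{0..1} - nodes J. R x = a * P x + b * Q x"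
  shows "Isharp lumped J R = a * Isharp lumped J P + b * Isharp lumped J Q"
  using Isharp_lincomb[OF J, of "{0::nat,1}" "\<lambda>l. if l = 0 then P else Q" R "\<lambda>l. if l = 0 then a else b" lumped] P eq by simp

lemma affine_zero:
  fixes f :: "real \<Rightarrow> real \<times> real"
  assumes f: "\<forall>x\<in>{a..b}. f x = A + x *\<^sub>R B" and y: "y1 \<in> {a..b}" "y2 \<in> {a..b}" "y1 \<noteq> y2"
    and z: "f y1 = 0" "f y2 = 0"
  shows "\<forall>x\<in>{a..b}. f x = 0"
proof -
  have "A + y1 *\<^sub>R B = 0" "A + y2 *\<^sub>R B = 0" using f y z by auto
  moreover have "(y1 - y2) *\<^sub>R B = (A + y1 *\<^sub>R B) - (A + y2 *\<^sub>R B)" by (simp add: algebra_simps)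
  ultimately have "(y1 - y2) *\<^sub>R B = 0" by simp
  then have "B = 0" using y(3) by simp
  then have "A = 0" using \<open>A + y1 *\<^sub>R B = 0\<close> by simp
  then show ?thesis using f \<open>B = 0\<close> by simp
qed

lemma W_sharp_scale: "f \<in> W_sharp lumped J per P0 \<Longrightarrow> (\<lambda>x. f x * a) \<in> W_sharp lumped J per P0"
  using Vh_scale[of f J per a] by (auto simp: W_sharp_def Wh_d0_def mult.commute split: if_splits)

context scm
begin

lemmas pwc = xe_pw nr_pw inv_nr_pw VVh_pw[OF J0, where per=per] drho_pw[OF J0, where per=per]

lemma drho_comb:
  assumes L: "finite L" and Xs: "\<And>l. l \<in> L \<Longrightarrow> Xs l \<in> VVh J per"
    and eq: "\<forall>x\<in>{0..1}. X x = (\<Sum>l\<in>L. c l *\<^sub>R Xs l x)" and x: "x \<in> {0..1} - nodes J"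
  shows "drho X x = (\<Sum>l\<in>L. c l *\<^sub>R drho (Xs l) x)"
proof -
  have "drho X x = drho (\<lambda>y. \<Sum>l\<in>L. c l *\<^sub>R Xs l y) x"
    by (rule drho_local) (use eq nodes_01[OF J0 x] in auto)
  also have "\<dots> = (\<Sum>l\<in>L. c l *\<^sub>R drho (Xs l) x)" by (rule drho_lin[OF J0 L Xs x])
  finally show ?thesis .
qed

lemma H1_lin1:
  assumes L: "finite L" and V: "\<And>l. l \<in> L \<Longrightarrow> ds l \<in> VVh J per" "\<And>l. l \<in> L \<Longrightarrow> ks l \<in> VVh J per"
    and ch: "ch \<in> VVh J per"
    and e1: "\<forall>x\<in>{0..1}. d x = (\<Sum>l\<in>L. c l *\<^sub>R ds l x)" and e2: "\<forall>x\<in>{0..1}. k x = (\<Sum>l\<in>L. c l *\<^sub>R ks l x)"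
  shows "H1 d k ch = (\<Sum>l\<in>L. c l * H1 (ds l) (ks l) ch)"
  unfolding H1_def
proof (rule Isharp_lincomb[OF J0 L])
  fix l assume l: "l \<in> L"
  show "pw J (\<lambda>x. W1 (ds l) (ks l) x \<bullet> ch x)"
    unfolding W1_def by (intro pw_intros pwc V[OF l] ch)
next
  show "\<forall>x\<in>{0..1} - nodes J. W1 d k x \<bullet> ch x = (\<Sum>l\<in>L. c l * (W1 (ds l) (ks l) x \<bullet> ch x))"
    using e1 e2 by (auto simp: W1_def inner_diff_left inner_sum_left sum_distrib_left algebra_simps
        sum_subtractf[symmetric])
qed

lemma H1_lin2:
  assumes L: "finite L" and V: "\<And>l. l \<in> L \<Longrightarrow> chs l \<in> VVh J per"
    and d: "d \<in> VVh J per" and k: "k \<in> VVh J per"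
    and e: "\<forall>x\<in>{0..1}. ch x = (\<Sum>l\<in>L. c l *\<^sub>R chs l x)"
  shows "H1 d k ch = (\<Sum>l\<in>L. c l * H1 d k (chs l))"
  unfolding H1_def
proof (rule Isharp_lincomb[OF J0 L])
  fix l assume l: "l \<in> L"
  show "pw J (\<lambda>x. W1 d k x \<bullet> chs l x)"
    unfolding W1_def by (intro pw_intros pwc V[OF l] d k)
next
  show "\<forall>x\<in>{0..1} - nodes J. W1 d k x \<bullet> ch x = (\<Sum>l\<in>L. c l * (W1 d k x \<bullet> chs l x))"
    using e by (auto simp: inner_sum_right algebra_simps)
qed

lemma H2_lin1:
  assumes L: "finite L" and V: "\<And>l. l \<in> L \<Longrightarrow> ds l \<in> VVh J per" "\<And>l. l \<in> L \<Longrightarrow> ks l \<in> VVh J per"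
    and eta: "eta \<in> VVh J per"
    and e1: "\<forall>x\<in>{0..1}. d x = (\<Sum>l\<in>L. c l *\<^sub>R ds l x)" and e2: "\<forall>x\<in>{0..1}. k x = (\<Sum>l\<in>L. c l *\<^sub>R ks l x)"
  shows "H2 d k eta = (\<Sum>l\<in>L. c l * H2 (ds l) (ks l) eta)"
proof -
  have a: "Isharp lumped J (\<lambda>x. ((xe x * nr x) *\<^sub>R k x) \<bullet> eta x)
      = (\<Sum>l\<in>L. c l * Isharp lumped J (\<lambda>x. ((xe x * nr x) *\<^sub>R ks l x) \<bullet> eta x))"
  proof (rule Isharp_lincomb[OF J0 L])
    fix l assume l: "l \<in> L"
    show "pw J (\<lambda>x. ((xe x * nr x) *\<^sub>R ks l x) \<bullet> eta x)" by (intro pw_intros pwc V[OF l] eta)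
  next
    show "\<forall>x\<in>{0..1} - nodes J. ((xe x * nr x) *\<^sub>R k x) \<bullet> eta x = (\<Sum>l\<in>L. c l * (((xe x * nr x) *\<^sub>R ks l x) \<bullet> eta x))"
      using e2 by (auto simp: inner_sum_left sum_distrib_left algebra_simps)
  qed
  have b: "Isharp False J (\<lambda>x. ((xe x * inverse (nr x)) *\<^sub>R drho d x) \<bullet> drho eta x)
      = (\<Sum>l\<in>L. c l * Isharp False J (\<lambda>x. ((xe x * inverse (nr x)) *\<^sub>R drho (ds l) x) \<bullet> drho eta x))"
  proof (rule Isharp_lincomb[OF J0 L])
    fix l assume l: "l \<in> L"
    show "pw J (\<lambda>x. ((xe x * inverse (nr x)) *\<^sub>R drho (ds l) x) \<bullet> drho eta x)" by (intro pw_intros pwc V[OF l] eta)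
  next
    show "\<forall>x\<in>{0..1} - nodes J. ((xe x * inverse (nr x)) *\<^sub>R drho d x) \<bullet> drho eta x
        = (\<Sum>l\<in>L. c l * (((xe x * inverse (nr x)) *\<^sub>R drho (ds l) x) \<bullet> drho eta x))"
      using drho_comb[OF L V(1) e1] by (auto simp: inner_sum_left sum_distrib_left algebra_simps)
  qed
  show ?thesis unfolding H2_def a b by (simp add: sum.distrib distrib_left)
qed

lemma H2_lin2:
  assumes L: "finite L" and V: "\<And>l. l \<in> L \<Longrightarrow> es l \<in> VVh J per"
    and d: "d \<in> VVh J per" and k: "k \<in> VVh J per"
    and e: "\<forall>x\<in>{0..1}. eta x = (\<Sum>l\<in>L. c l *\<^sub>R es l x)"
  shows "H2 d k eta = (\<Sum>l\<in>L. c l * H2 d k (es l))"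
proof -
  have a: "Isharp lumped J (\<lambda>x. ((xe x * nr x) *\<^sub>R k x) \<bullet> eta x)
      = (\<Sum>l\<in>L. c l * Isharp lumped J (\<lambda>x. ((xe x * nr x) *\<^sub>R k x) \<bullet> es l x))"
  proof (rule Isharp_lincomb[OF J0 L])
    fix l assume l: "l \<in> L"
    show "pw J (\<lambda>x. ((xe x * nr x) *\<^sub>R k x) \<bullet> es l x)" by (intro pw_intros pwc V[OF l] k)
  next
    show "\<forall>x\<in>{0..1} - nodes J. ((xe x * nr x) *\<^sub>R k x) \<bullet> eta x = (\<Sum>l\<in>L. c l * (((xe x * nr x) *\<^sub>R k x) \<bullet> es l x))"
      using e by (auto simp: inner_sum_right algebra_simps)
  qed
  have b: "Isharp False J (\<lambda>x. ((xe x * inverse (nr x)) *\<^sub>R drho d x) \<bullet> drho eta x)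
      = (\<Sum>l\<in>L. c l * Isharp False J (\<lambda>x. ((xe x * inverse (nr x)) *\<^sub>R drho d x) \<bullet> drho (es l) x))"
  proof (rule Isharp_lincomb[OF J0 L])
    fix l assume l: "l \<in> L"
    show "pw J (\<lambda>x. ((xe x * inverse (nr x)) *\<^sub>R drho d x) \<bullet> drho (es l) x)" by (intro pw_intros pwc V[OF l] d)
  next
    show "\<forall>x\<in>{0..1} - nodes J. ((xe x * inverse (nr x)) *\<^sub>R drho d x) \<bullet> drho eta x
        = (\<Sum>l\<in>L. c l * (((xe x * inverse (nr x)) *\<^sub>R drho d x) \<bullet> drho (es l) x))"
      using drho_comb[OF L V e] by (auto simp: inner_sum_right algebra_simps)
  qed
  show ?thesis unfolding H2_def a b by (simp add: sum.distrib distrib_left)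
qed

lemma Rz_lin:
  assumes L: "finite L" and V: "\<And>l. l \<in> L \<Longrightarrow> es l \<in> VVh J per"
    and e: "\<forall>x\<in>{0..1}. eta x = (\<Sum>l\<in>L. c l *\<^sub>R es l x)"
  shows "Rz eta = (\<Sum>l\<in>L. c l * Rz (es l))"
proof -
  have a: "Isharp False J (\<lambda>x. (nr x *\<^sub>R e1) \<bullet> eta x) = (\<Sum>l\<in>L. c l * Isharp False J (\<lambda>x. (nr x *\<^sub>R e1) \<bullet> es l x))"
  proof (rule Isharp_lincomb[OF J0 L])
    fix l assume l: "l \<in> L"
    show "pw J (\<lambda>x. (nr x *\<^sub>R e1) \<bullet> es l x)" by (intro pw_intros pwc V[OF l])
  next
    show "\<forall>x\<in>{0..1} - nodes J. (nr x *\<^sub>R e1) \<bullet> eta x = (\<Sum>l\<in>L. c l * ((nr x *\<^sub>R e1) \<bullet> es l x))"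
      using e by (auto simp: inner_sum_right algebra_simps)
  qed
  have b: "Isharp False J (\<lambda>x. ((xe x * inverse (nr x)) *\<^sub>R drho Xm x) \<bullet> drho eta x)
      = (\<Sum>l\<in>L. c l * Isharp False J (\<lambda>x. ((xe x * inverse (nr x)) *\<^sub>R drho Xm x) \<bullet> drho (es l) x))"
  proof (rule Isharp_lincomb[OF J0 L])
    fix l assume l: "l \<in> L"
    show "pw J (\<lambda>x. ((xe x * inverse (nr x)) *\<^sub>R drho Xm x) \<bullet> drho (es l) x)" by (intro pw_intros pwc V[OF l] XmV)
  next
    show "\<forall>x\<in>{0..1} - nodes J. ((xe x * inverse (nr x)) *\<^sub>R drho Xm x) \<bullet> drho eta x
        = (\<Sum>l\<in>L. c l * (((xe x * inverse (nr x)) *\<^sub>R drho Xm x) \<bullet> drho (es l) x))"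
      using drho_comb[OF L V e] by (auto simp: inner_sum_right algebra_simps)
  qed
  have P01: "P1 \<subseteq> {0..1}" "P2 \<subseteq> {0..1}" using Psub by auto
  have c1: "(\<Sum>p\<in>P1. rh p * (Xm p \<bullet> e1) * (eta p \<bullet> e2)) = (\<Sum>l\<in>L. c l * (\<Sum>p\<in>P1. rh p * (Xm p \<bullet> e1) * (es l p \<bullet> e2)))"
  proof -
    have "(\<Sum>p\<in>P1. rh p * (Xm p \<bullet> e1) * (eta p \<bullet> e2)) = (\<Sum>p\<in>P1. \<Sum>l\<in>L. c l * (rh p * (Xm p \<bullet> e1) * (es l p \<bullet> e2)))"
      by (intro sum.cong refl) (use e P01 in \<open>auto simp: inner_sum_left sum_distrib_left algebra_simps\<close>)
    also have "\<dots> = (\<Sum>l\<in>L. \<Sum>p\<in>P1. c l * (rh p * (Xm p \<bullet> e1) * (es l p \<bullet> e2)))" by (rule sum.swap)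
    finally show ?thesis by (simp add: sum_distrib_left)
  qed
  have c2: "(\<Sum>p\<in>P2. rh p * (Xm p \<bullet> e1) * (eta p \<bullet> e1)) = (\<Sum>l\<in>L. c l * (\<Sum>p\<in>P2. rh p * (Xm p \<bullet> e1) * (es l p \<bullet> e1)))"
  proof -
    have "(\<Sum>p\<in>P2. rh p * (Xm p \<bullet> e1) * (eta p \<bullet> e1)) = (\<Sum>p\<in>P2. \<Sum>l\<in>L. c l * (rh p * (Xm p \<bullet> e1) * (es l p \<bullet> e1)))"
      by (intro sum.cong refl) (use e P01 in \<open>auto simp: inner_sum_left sum_distrib_left algebra_simps\<close>)
    also have "\<dots> = (\<Sum>l\<in>L. \<Sum>p\<in>P2. c l * (rh p * (Xm p \<bullet> e1) * (es l p \<bullet> e1)))" by (rule sum.swap)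
    finally show ?thesis by (simp add: sum_distrib_left)
  qed
  show ?thesis unfolding Rz_def a b c1 c2 by (simp add: sum.distrib distrib_left)
qed

end


context scm
begin

lemma xe_node_pos: "l \<le> J \<Longrightarrow> node J l \<notin> P0 \<Longrightarrow> xe (node J l) > 0"
  using pos node_in01[OF J0] by (auto simp: xe_def)

lemma WW_P0: "k \<in> WW_sharp lumped J per P0 \<Longrightarrow> lumped \<Longrightarrow> \<rho> \<in> P0 \<Longrightarrow> k \<rho> = 0"
  by (auto simp: WW_sharp_def W_sharp_def Wh_d0_def inner_e1 inner_e2 prod_eq_iff)

lemma mid_in:
  assumes j: "j \<in> {1..J}"
  shows "(2 * node J (j-1) + node J j) / 3 \<in> {node J (j-1)<..<node J j}"
    "(node J (j-1) + 2 * node J j) / 3 \<in> {node J (j-1)<..<node J j}"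
    "(2 * node J (j-1) + node J j) / 3 \<noteq> (node J (j-1) + 2 * node J j) / 3"
  using node_less[OF J0, of "j-1" j] j by auto

lemma homog_zero:
  assumes d: "d \<in> VVh_d J per PD P0 P1 P2" and k: "k \<in> WW_sharp lumped J per P0"
    and h1: "\<forall>ch\<in>WW_sharp lumped J per P0. H1 d k ch = 0"
    and h2: "\<forall>eta\<in>VVh_d J per PD P0 P1 P2. H2 d k eta = 0"
  shows "\<forall>x\<in>{0..1}. d x = 0 \<and> k x = 0"
proof -
  have dV: "d \<in> VVh J per" using d by (rule VVh_d_VVh)
  have kV: "k \<in> VVh J per" using k by (rule WW_VVh)
  define PA where "PA x = xe x * nr x * (d x \<bullet> k x)" for x
  define PB where "PB x = xe x * nr x * (k x \<bullet> k x)" for x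
  define PC where "PC x = xe x * inverse (nr x) * (drho d x \<bullet> drho d x)" for x
  have pwA: "pw J PA" unfolding PA_def by (intro pw_intros pwc dV kV)
  have pwB: "pw J PB" unfolding PB_def by (intro pw_intros pwc kV)
  have pwC: "pw J PC" unfolding PC_def by (intro pw_intros pwc dV)
  have nnB: "\<forall>x\<in>{0..1} - nodes J. 0 \<le> PB x"
    unfolding PB_def using xe_nn by (auto simp: nr_def intro!: mult_nonneg_nonneg)
  have nnC: "\<forall>x\<in>{0..1} - nodes J. 0 \<le> PC x"
    unfolding PC_def using xe_nn by (auto simp: nr_def intro!: mult_nonneg_nonneg)
  have "H1 d k k = (1/dt) * Isharp lumped J PA + (-1) * Isharp lumped J PB"
    unfolding H1_def
    by (rule Isharp_lin2[OF J0 pwA pwB]) (auto simp: W1_def PA_def PB_def inner_diff_left algebra_simps)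
  then have eA: "Isharp lumped J PA = dt * Isharp lumped J PB" using h1 k dt by (auto simp: field_simps)
  have i1: "Isharp lumped J (\<lambda>x. ((xe x * nr x) *\<^sub>R k x) \<bullet> d x) = Isharp lumped J PA"
    by (rule Isharp_cong[OF J0]) (simp add: PA_def inner_commute)
  have i2: "Isharp False J (\<lambda>x. ((xe x * inverse (nr x)) *\<^sub>R drho d x) \<bullet> drho d x) = Isharp False J PC"
    by (rule Isharp_cong[OF J0]) (simp add: PC_def)
  have "H2 d k d = Isharp lumped J PA + Isharp False J PC"
    unfolding H2_def i1 i2 ..
  then have eC: "Isharp lumped J PA + Isharp False J PC = 0" using h2 d by auto
  have nb: "0 \<le> Isharp lumped J PB" by (rule Isharp_nonneg[OF J0 pwB nnB])
  have nc: "0 \<le> Isharp False J PC" by (rule Isharp_nonneg[OF J0 pwC nnC])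
  have "0 \<le> dt * Isharp lumped J PB" using nb dt by simp
  moreover have "dt * Isharp lumped J PB + Isharp False J PC = 0" using eA eC by simp
  ultimately have "dt * Isharp lumped J PB = 0" "Isharp False J PC = 0" using nc by linarith+
  then have B0: "Isharp lumped J PB = 0" and C0: "Isharp False J PC = 0" using dt by auto
  have dconst: "\<forall>x\<in>{node J (j-1)..node J j}. d x = d (node J j)" if j: "j \<in> {1..J}" for j
  proof -
    obtain A B where AB: "\<forall>x\<in>{node J (j-1)..node J j}. d x = A + x *\<^sub>R B"
       "\<forall>x\<in>{node J (j-1)<..<node J j}. (d has_vector_derivative B) (at x) \<and> drho d x = B"
      using VVh_elem[OF J0 dV j] by blast
    obtain w where w: "w \<noteq> 0" "\<forall>x\<in>{node J (j-1)<..<node J j}. drho Xm x = w \<and> nr x = norm w"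
      using nr_elem[OF j] by blast
    define g where "g x = xe x * inverse (norm w) * (B \<bullet> B)" for x
    have cg: "continuous_on {node J (j-1)..node J j} g"
      unfolding g_def by (intro continuous_intros continuous_on_subset[OF xe_cont elem_sub01[OF J0 j]])
    have eg: "\<forall>x\<in>{node J (j-1)<..<node J j}. PC x = g x" using AB(2) w(2) by (auto simp: PC_def g_def)
    define y where "y = (2 * node J (j-1) + node J j) / 3"
    have y: "y \<in> {node J (j-1)<..<node J j}" using mid_in[OF j] by (simp add: y_def)
    have "g y = 0"
      by (rule int_zero_pt[OF J0 pwC nnC _ j cg eg y]) (use C0 in \<open>simp add: Isharp_def\<close>)
    moreover have "xe y > 0" using xe_pos nodes_01[OF J0] open_elem_not_node[OF J0 j y] by auto
    ultimately have "B = 0" using w(1) by (simp add: g_def)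
    then show ?thesis using AB(1) node_le[OF J0, of "j-1" j] j by auto
  qed
  have dnode: "k' \<le> J \<Longrightarrow> d (node J k') = d 0" for k'
  proof (induction k')
    case 0 then show ?case by simp
  next
    case (Suc k')
    have j: "Suc k' \<in> {1..J}" using Suc by auto
    have "node J k' \<in> {node J (Suc k' - 1)..node J (Suc k')}" using node_le[OF J0, of k' "Suc k'"] by auto
    then have "d (node J k') = d (node J (Suc k'))" by (rule bspec[OF dconst[OF j]])
    then show ?case using Suc by simp
  qed
  have dc: "\<forall>x\<in>{0..1}. d x = d 0"
  proof
    fix x :: real assume x: "x \<in> {0..1}"
    obtain j where j: "j \<in> {1..J}" "x \<in> {node J (j-1)..node J j}" using elem_cover_closed[OF J0 x] by blast
    have "d x = d (node J j)" by (rule bspec[OF dconst[OF j(1)] j(2)])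
    moreover have "d (node J j) = d 0" using dnode[of j] j(1) by simp
    ultimately show "d x = d 0" by simp
  qed
  have kz: "\<forall>x\<in>{node J (j-1)..node J j}. k x = 0" if j: "j \<in> {1..J}" for j
  proof -
    obtain A B where AB: "\<forall>x\<in>{node J (j-1)..node J j}. k x = A + x *\<^sub>R B"
      using VVh_elem[OF J0 kV j] by blast
    obtain w where w: "w \<noteq> 0" "\<forall>x\<in>{node J (j-1)<..<node J j}. drho Xm x = w \<and> nr x = norm w"
      using nr_elem[OF j] by blast
    define g where "g x = xe x * norm w * (k x \<bullet> k x)" for x
    have cg: "continuous_on {node J (j-1)..node J j} g"
      unfolding g_def by (intro continuous_intros continuous_on_subset[OF xe_cont elem_sub01[OF J0 j]]
          continuous_on_subset[OF VVh_cont[OF kV] elem_sub01[OF J0 j]])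
    have eg: "\<forall>x\<in>{node J (j-1)<..<node J j}. PB x = g x" using w(2) by (auto simp: PB_def g_def)
    have lt: "node J (j-1) < node J j" using node_less[OF J0, of "j-1" j] j by auto
    show ?thesis
    proof (cases lumped)
      case True
      have L: "Lim (at_left (node J j)) PB = 0 \<and> Lim (at_right (node J (j-1))) PB = 0"
        using lumped_zero[OF J0 pwB nnB _ j] B0 True by simp
      have "g (node J j) = 0" "g (node J (j-1)) = 0" using L pw_Lim[OF J0 j cg eg] by auto
      moreover have "k (node J l) = 0" if l: "l \<le> J" and gl: "g (node J l) = 0" for l
      proof (cases "node J l \<in> P0")
        case True then show ?thesis using WW_P0[OF k \<open>lumped\<close>] by blast
      next
        case False
        then have "xe (node J l) > 0" using xe_node_pos l by blast
        then show ?thesis using gl w(1) by (simp add: g_def)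
      qed
      ultimately have "k (node J j) = 0" "k (node J (j-1)) = 0" using j by auto
      then show ?thesis
        by (intro affine_zero[OF AB, of "node J (j-1)" "node J j"]) (use lt in auto)
    next
      case False
      have zy: "k y = 0" if y: "y \<in> {node J (j-1)<..<node J j}" for y
      proof -
        have "g y = 0"
          by (rule int_zero_pt[OF J0 pwB nnB _ j cg eg y]) (use B0 False in \<open>simp add: Isharp_def\<close>)
        moreover have "xe y > 0" using xe_pos nodes_01[OF J0] open_elem_not_node[OF J0 j y] by auto
        ultimately show ?thesis using w(1) by (simp add: g_def)
      qed
      show ?thesis
        by (rule affine_zero[OF AB _ _ mid_in(3)[OF j]]) (use mid_in[OF j] zy in auto)
    qed
  qed
  have k0: "\<forall>x\<in>{0..1}. k x = 0"
    using kz elem_cover_closed[OF J0] by blast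
  define c where "c = d 0"
  have h1V: "hat J 1 \<in> Vh J per"
  proof -
    have "hat J 1 0 = hat J 1 1" using J3 by (simp add: hat_0[OF J0] hat_1[OF J0])
    then show ?thesis using hat_Vh[OF J0, of 1] unfolding Vh_def by auto
  qed
  have h1W: "hat J 1 \<in> W_sharp lumped J per P0"
  proof -
    have "hat J 1 \<rho> = 0" if "\<rho> \<in> P0" for \<rho>
      using that Psub(2) J3 by (auto simp: hat_0[OF J0] hat_1[OF J0])
    then show ?thesis using h1V by (auto simp: W_sharp_def Wh_d0_def)
  qed
  define ch where "ch x = hat J 1 x *\<^sub>R c" for x
  have chW: "ch \<in> WW_sharp lumped J per P0"
    using W_sharp_scale[OF h1W, of "c \<bullet> e1"] W_sharp_scale[OF h1W, of "c \<bullet> e2"]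
    by (simp add: WW_sharp_def ch_def)
  define PQ where "PQ x = xe x / dt * nr x * hat J 1 x * (c \<bullet> c)" for x
  have pwQ: "pw J PQ" unfolding PQ_def
    by (intro pw_intros pwc Vh_pw[OF J0 hat_Vh[OF J0]])
  have nnQ: "\<forall>x\<in>{0..1} - nodes J. 0 \<le> PQ x"
  proof
    fix x assume x: "x \<in> {0..1} - nodes J"
    have a: "0 \<le> xe x / dt" using xe_nn x dt by simp
    have b: "0 \<le> nr x" by (simp add: nr_def)
    have c: "0 \<le> hat J 1 x" by (simp add: hat_def)
    have e: "0 \<le> c \<bullet> c" by simp
    show "0 \<le> PQ x" unfolding PQ_def using a b c e by (intro mult_nonneg_nonneg)
  qed
  have Q0: "Isharp lumped J PQ = 0"
  proof -
    have dc': "\<forall>x\<in>{0..1}. d x = c" unfolding c_def by (rule dc)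
    have "Isharp lumped J PQ = H1 d k ch" unfolding H1_def
    proof (rule Isharp_cong[OF J0], rule ballI)
      fix x assume x: "x \<in> {0..1} - nodes J"
      have "d x = c" "k x = 0" using dc' k0 x by auto
      then show "PQ x = W1 d k x \<bullet> ch x" by (simp add: PQ_def W1_def ch_def mult_ac)
    qed
    then show ?thesis using h1 chW by auto
  qed
  have j1: "(1::nat) \<in> {1..J}" using J3 by auto
  obtain w where w: "w \<noteq> 0" "\<forall>x\<in>{node J (1-1)<..<node J 1}. drho Xm x = w \<and> nr x = norm w"
    using nr_elem[OF j1] by blast
  define g where "g x = xe x / dt * norm w * hat J 1 x * (c \<bullet> c)" for x
  have cg: "continuous_on {node J (1-1)..node J 1} g"
    unfolding g_def hat_def
    by (intro continuous_intros continuous_on_subset[OF xe_cont elem_sub01[OF J0 j1]]) (use dt in auto)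
  have eg: "\<forall>x\<in>{node J (1-1)<..<node J 1}. PQ x = g x" using w(2) by (auto simp: PQ_def g_def)
  have n1: "node J 1 \<in> {0<..<1}" using J3 by (auto simp: node_def)
  have "c \<bullet> c = 0"
  proof (cases lumped)
    case True
    have "Lim (at_left (node J 1)) PQ = 0" using lumped_zero[OF J0 pwQ nnQ _ j1] Q0 True by simp
    then have "g (node J 1) = 0" using pw_Lim(1)[OF J0 j1 cg eg] by simp
    moreover have "xe (node J 1) > 0" using xe_pos n1 by blast
    moreover have "hat J 1 (node J 1) = 1" using hat_node[OF J0] by simp
    ultimately show ?thesis using w(1) dt by (simp add: g_def)
  next
    case False
    define y where "y = node J 1 / 2"
    have y: "y \<in> {node J (1-1)<..<node J 1}" using n1 by (auto simp: y_def)
    have "g y = 0"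
      by (rule int_zero_pt[OF J0 pwQ nnQ _ j1 cg eg y]) (use Q0 False in \<open>simp add: Isharp_def\<close>)
    moreover have "xe y > 0" using xe_pos n1 y by auto
    moreover have "hat J 1 y = 1/2" using J0 by (simp add: y_def hat_def node_def)
    ultimately show ?thesis using w(1) dt by (simp add: g_def)
  qed
  then have c0: "c = 0" by simp
  show ?thesis
  proof
    fix x :: real assume x: "x \<in> {0..1}"
    have "d x = d 0" using dc x by blast
    then show "d x = 0 \<and> k x = 0" using c0 k0 x unfolding c_def by auto
  qed
qed

end


lemma sum4: fixes M :: nat shows "(\<Sum>m<M*4. g m) = (\<Sum>i<M. g (i*4) + g (i*4+1) + g (i*4+2) + g (i*4+3))"
proof -
  have "(\<Sum>m<M*4. g m) = (\<Sum>i<M. sum g {i*4..<i*4+4})" by (rule sum.nat_group[symmetric])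
  also have "\<dots> = (\<Sum>i<M. g (i*4) + g (i*4+1) + g (i*4+2) + g (i*4+3))"
    by (intro sum.cong refl) (simp add: numeral_eq_Suc add.assoc)
  finally show ?thesis .
qed

lemma div4[simp]: "Suc (i*4) div 4 = i" "Suc (i*4) mod 4 = 1" "Suc (Suc (i*4)) div 4 = i"
  "Suc (Suc (i*4)) mod 4 = 2" "Suc (Suc (Suc (i*4))) div 4 = i" "Suc (Suc (Suc (i*4))) mod 4 = 3"
  "(i*4) div 4 = i" "(i*4) mod 4 = 0" "(i * 4 + 2) div 4 = i" "(i * 4 + 2) mod 4 = 2"
  "(i * 4 + 3) div 4 = i" "(i * 4 + 3) mod 4 = 3" "(i * 4 + 1) div 4 = i" "(i * 4 + 1) mod 4 = 1"
  for i :: nat by presburger+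

definition vX :: "nat \<Rightarrow> real \<times> real" where "vX k = (if k = 0 then e1 else if k = 1 then e2 else 0)"
definition vK :: "nat \<Rightarrow> real \<times> real" where "vK k = (if k = 2 then e1 else if k = 3 then e2 else 0)"

context scm
begin

definition bX where "bX m = (\<lambda>x. hatp J per (m div 4) x *\<^sub>R vX (m mod 4))"
definition bK where "bK m = (\<lambda>x. hatp J per (m div 4) x *\<^sub>R vK (m mod 4))"
definition NN where "NN = nM J per * 4"
definition nd where "nd m = node J (m div 4)"
definition adm where "adm m \<longleftrightarrow> (m mod 4 = 0 \<longrightarrow> nd m \<notin> P0 \<union> P1 \<union> PD) \<and>
   (m mod 4 = 1 \<longrightarrow> nd m \<notin> P2 \<union> PD) \<and> (2 \<le> m mod 4 \<longrightarrow> lumped \<longrightarrow> nd m \<notin> P0)"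
definition cX where "cX eta m = eta (nd m) \<bullet> vX (m mod 4)"
definition cK where "cK ch m = ch (nd m) \<bullet> vK (m mod 4)"

lemma mdiv: "m < NN \<Longrightarrow> m div 4 < nM J per" by (simp add: NN_def less_mult_imp_div_less)

lemma bX_V: "m < NN \<Longrightarrow> bX m \<in> VVh J per"
  unfolding bX_def by (intro VVh_fun_vec hatp_Vh[OF J0] mdiv)
lemma bK_V: "m < NN \<Longrightarrow> bK m \<in> VVh J per"
  unfolding bK_def by (intro VVh_fun_vec hatp_Vh[OF J0] mdiv)

lemma hatp_nz:
  assumes m: "m < NN" and \<rho>: "\<rho> \<in> PD \<union> P0 \<union> P1 \<union> P2" and nz: "hatp J per (m div 4) \<rho> \<noteq> 0"
  shows "\<rho> = nd m"
proof -
  have np: "\<not> per" using Pper \<rho> by auto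
  show ?thesis unfolding nd_def
    by (rule hatp_bdry[OF J0 np _ mdiv[OF m] nz]) (use Psub \<rho> in auto)
qed

lemma bX_d: assumes m: "m < NN" and a: "adm m" shows "bX m \<in> VVh_d J per PD P0 P1 P2"
proof -
  have k: "m mod 4 < 4" by simp
  have c1: "bX m \<rho> \<bullet> e1 = 0" if "\<rho> \<in> P0 \<union> P1" for \<rho>
  proof (cases "hatp J per (m div 4) \<rho> = 0")
    case False
    then have "\<rho> = nd m" using hatp_nz[OF m] that by auto
    then show ?thesis using a that by (auto simp: bX_def vX_def adm_def e1_def e2_def)
  qed (simp add: bX_def)
  have c2: "bX m \<rho> \<bullet> e2 = 0" if "\<rho> \<in> P2" for \<rho>
  proof (cases "hatp J per (m div 4) \<rho> = 0")
    case False
    then have "\<rho> = nd m" using hatp_nz[OF m] that by auto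
    then show ?thesis using a that by (auto simp: bX_def vX_def adm_def e1_def e2_def)
  qed (simp add: bX_def)
  have c3: "bX m \<rho> = 0" if "\<rho> \<in> PD" for \<rho>
  proof (cases "hatp J per (m div 4) \<rho> = 0")
    case False
    then have "\<rho> = nd m" using hatp_nz[OF m] that by auto
    then show ?thesis using a that by (auto simp: bX_def vX_def adm_def e1_def e2_def)
  qed (simp add: bX_def)
  show ?thesis using bX_V[OF m] c1 c2 c3 by (auto simp: VVh_d_def VVh_d0_def)
qed

lemma bK_W: assumes m: "m < NN" and a: "adm m" shows "bK m \<in> WW_sharp lumped J per P0"
proof -
  have h: "hatp J per (m div 4) \<in> Vh J per" by (rule hatp_Vh[OF J0 mdiv[OF m]])
  have a': "nd m \<notin> P0" if "2 \<le> m mod 4" "lumped" using a that unfolding adm_def by blast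
  have z: "hatp J per (m div 4) \<rho> * (vK (m mod 4) \<bullet> e) = 0" if l: "lumped" and r: "\<rho> \<in> P0" for \<rho> e
  proof (cases "hatp J per (m div 4) \<rho> = 0")
    case False
    then have "\<rho> = nd m" using hatp_nz[OF m] r by auto
    then have "\<not> 2 \<le> m mod 4" using a' l r by auto
    then have "vK (m mod 4) = 0" by (simp add: vK_def)
    then show ?thesis by simp
  qed simp
  have "(\<lambda>x. hatp J per (m div 4) x * (vK (m mod 4) \<bullet> e)) \<in> W_sharp lumped J per P0" if "e = e1 \<or> e = e2" for e
    using Vh_scale[OF h, of "vK (m mod 4) \<bullet> e"] z
    by (auto simp: W_sharp_def Wh_d0_def mult.commute)
  then show ?thesis by (simp add: WW_sharp_def bK_def)
qed

lemma vX_split: "((v::real\<times>real) \<bullet> vX 0) *\<^sub>R vX 0 + (v \<bullet> vX 1) *\<^sub>R vX 1 + (v \<bullet> vX 2) *\<^sub>R vX 2 + (v \<bullet> vX 3) *\<^sub>R vX 3 = v"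
  by (cases v) (simp add: vX_def e1_def e2_def)
lemma vK_split: "((v::real\<times>real) \<bullet> vK 0) *\<^sub>R vK 0 + (v \<bullet> vK 1) *\<^sub>R vK 1 + (v \<bullet> vK 2) *\<^sub>R vK 2 + (v \<bullet> vK 3) *\<^sub>R vK 3 = v"
  by (cases v) (simp add: vK_def e1_def e2_def)

lemma repX:
  assumes eta: "eta \<in> VVh J per" and x: "x \<in> {0..1}"
  shows "eta x = (\<Sum>m<NN. cX eta m *\<^sub>R bX m x)"
proof -
  have "(\<Sum>m<NN. cX eta m *\<^sub>R bX m x) = (\<Sum>i<nM J per. hatp J per i x *\<^sub>R
      ((eta (node J i) \<bullet> vX 0) *\<^sub>R vX 0 + (eta (node J i) \<bullet> vX 1) *\<^sub>R vX 1 + (eta (node J i) \<bullet> vX 2) *\<^sub>R vX 2 + (eta (node J i) \<bullet> vX 3) *\<^sub>R vX 3))"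
    unfolding NN_def sum4 by (intro sum.cong refl) (simp add: cX_def bX_def nd_def scaleR_add_right mult.commute)
  also have "\<dots> = (\<Sum>i<nM J per. hatp J per i x *\<^sub>R eta (node J i))" by (simp only: vX_split)
  finally show ?thesis using VVh_interp[OF J0 eta x] by simp
qed

lemma repK:
  assumes ch: "ch \<in> VVh J per" and x: "x \<in> {0..1}"
  shows "ch x = (\<Sum>m<NN. cK ch m *\<^sub>R bK m x)"
proof -
  have "(\<Sum>m<NN. cK ch m *\<^sub>R bK m x) = (\<Sum>i<nM J per. hatp J per i x *\<^sub>R
      ((ch (node J i) \<bullet> vK 0) *\<^sub>R vK 0 + (ch (node J i) \<bullet> vK 1) *\<^sub>R vK 1 + (ch (node J i) \<bullet> vK 2) *\<^sub>R vK 2 + (ch (node J i) \<bullet> vK 3) *\<^sub>R vK 3))"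
    unfolding NN_def sum4 by (intro sum.cong refl) (simp add: cK_def bK_def nd_def scaleR_add_right mult.commute)
  also have "\<dots> = (\<Sum>i<nM J per. hatp J per i x *\<^sub>R ch (node J i))" by (simp only: vK_split)
  finally show ?thesis using VVh_interp[OF J0 ch x] by simp
qed

lemma cX_zero:
  assumes eta: "eta \<in> VVh_d J per PD P0 P1 P2" and nz: "cX eta m \<noteq> 0"
  shows "m mod 4 < 2 \<and> adm m"
proof -
  have "m mod 4 < 2"
  proof (rule ccontr)
    assume "\<not> m mod 4 < 2"
    then have "vX (m mod 4) = 0" by (simp add: vX_def)
    then show False using nz by (simp add: cX_def)
  qed
  moreover have "adm m"
    using nz eta unfolding adm_def cX_def by (auto simp: vX_def VVh_d_def VVh_d0_def)
  ultimately show ?thesis by simp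
qed

lemma cK_zero:
  assumes ch: "ch \<in> WW_sharp lumped J per P0" and nz: "cK ch m \<noteq> 0"
  shows "\<not> m mod 4 < 2 \<and> adm m"
proof -
  have "\<not> m mod 4 < 2" using nz by (auto simp: cK_def vK_def)
  moreover have "adm m"
    using nz WW_P0[OF ch] unfolding adm_def cK_def by (auto simp: vK_def)
  ultimately show ?thesis by simp
qed

lemma eval_nodes:
  assumes i: "i < nM J per"
  shows "(\<Sum>m<NN. c m *\<^sub>R bX m (node J i)) = c (i*4) *\<^sub>R e1 + c (i*4+1) *\<^sub>R e2"
    "(\<Sum>m<NN. c m *\<^sub>R bK m (node J i)) = c (i*4+2) *\<^sub>R e1 + c (i*4+3) *\<^sub>R e2"
proof -
  have hn: "hatp J per i' (node J i) = (if i' = i then 1 else 0)" if "i' < nM J per" for i'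
    using hatp_node[OF J0 that i] .
  show "(\<Sum>m<NN. c m *\<^sub>R bX m (node J i)) = c (i*4) *\<^sub>R e1 + c (i*4+1) *\<^sub>R e2"
  proof -
    have "(\<Sum>m<NN. c m *\<^sub>R bX m (node J i)) = (\<Sum>x<nM J per. if x = i then c (i*4) *\<^sub>R e1 + c (i*4+1) *\<^sub>R e2 else 0)"
      unfolding NN_def sum4 by (intro sum.cong refl) (auto simp: bX_def vX_def hn)
    then show ?thesis using i by simp
  qed
  show "(\<Sum>m<NN. c m *\<^sub>R bK m (node J i)) = c (i*4+2) *\<^sub>R e1 + c (i*4+3) *\<^sub>R e2"
  proof -
    have "(\<Sum>m<NN. c m *\<^sub>R bK m (node J i)) = (\<Sum>x<nM J per. if x = i then c (i*4+2) *\<^sub>R e1 + c (i*4+3) *\<^sub>R e2 else 0)"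
      unfolding NN_def sum4 by (intro sum.cong refl) (auto simp: bK_def vK_def hn)
    then show ?thesis using i by simp
  qed
qed

end


context scm
begin

definition Tst where "Tst l d k = (if l mod 4 < 2 then H2 d k (bX l) else H1 d k (bK l))"
definition Mat where "Mat l m = (if adm l then Tst l (bX m) (bK m) else (if l = m then 1 else 0))"
definition rhs where "rhs l = (if adm l \<and> l mod 4 < 2 then - Rz (bX l) else 0)"

definition UX where "UX c = (\<lambda>x. \<Sum>m<NN. c m *\<^sub>R bX m x)"
definition UK where "UK c = (\<lambda>x. \<Sum>m<NN. c m *\<^sub>R bK m x)"

lemma UX_V: "UX c \<in> VVh J per" unfolding UX_def by (intro VVh_sum VVh_scale bX_V) auto
lemma UK_V: "UK c \<in> VVh J per" unfolding UK_def by (intro VVh_sum VVh_scale bK_V) auto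

lemma UX_d: "(\<forall>m<NN. \<not> adm m \<longrightarrow> c m = 0) \<Longrightarrow> UX c \<in> VVh_d J per PD P0 P1 P2"
  unfolding UX_def by (rule VVh_d_lincomb) (use bX_d in auto)
lemma UK_W: "(\<forall>m<NN. \<not> adm m \<longrightarrow> c m = 0) \<Longrightarrow> UK c \<in> WW_sharp lumped J per P0"
  unfolding UK_def by (rule WW_lincomb) (use bK_W in auto)

lemma Tst_lin: "l < NN \<Longrightarrow> Tst l (UX c) (UK c) = (\<Sum>m<NN. c m * Tst l (bX m) (bK m))"
proof -
  assume l: "l < NN"
  show ?thesis
  proof (cases "l mod 4 < 2")
    case True
    show ?thesis unfolding Tst_def using True
      by simp (rule H2_lin1, auto simp: UX_def UK_def intro: bX_V bK_V l)
  next
    case False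
    show ?thesis unfolding Tst_def using False
      by simp (rule H1_lin1, auto simp: UX_def UK_def intro: bX_V bK_V l)
  qed
qed

lemma all_H1:
  assumes d: "d \<in> VVh J per" and k: "k \<in> VVh J per"
    and T: "\<forall>l<NN. adm l \<and> \<not> l mod 4 < 2 \<longrightarrow> H1 d k (bK l) = 0"
  shows "\<forall>ch\<in>WW_sharp lumped J per P0. H1 d k ch = 0"
proof
  fix ch assume ch: "ch \<in> WW_sharp lumped J per P0"
  have "H1 d k ch = (\<Sum>m<NN. cK ch m * H1 d k (bK m))"
    by (rule H1_lin2[OF _ bK_V d k]) (use repK[OF WW_VVh[OF ch]] in auto)
  also have "\<dots> = 0"
  proof (rule sum.neutral, rule ballI)
    fix m assume m: "m \<in> {..<NN}"
    show "cK ch m * H1 d k (bK m) = 0"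
    proof (cases "cK ch m = 0")
      case False then show ?thesis using cK_zero[OF ch False] T m by auto
    qed simp
  qed
  finally show "H1 d k ch = 0" .
qed

lemma all_H2:
  assumes d: "d \<in> VVh J per" and k: "k \<in> VVh J per"
    and T: "\<forall>l<NN. adm l \<and> l mod 4 < 2 \<longrightarrow> H2 d k (bX l) + a * Rz (bX l) = 0"
  shows "\<forall>eta\<in>VVh_d J per PD P0 P1 P2. H2 d k eta + a * Rz eta = 0"
proof
  fix eta assume eta: "eta \<in> VVh_d J per PD P0 P1 P2"
  have r: "\<forall>x\<in>{0..1}. eta x = (\<Sum>m<NN. cX eta m *\<^sub>R bX m x)" using repX[OF VVh_d_VVh[OF eta]] by auto
  have "H2 d k eta + a * Rz eta = (\<Sum>m<NN. cX eta m * H2 d k (bX m)) + a * (\<Sum>m<NN. cX eta m * Rz (bX m))"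
    using H2_lin2[OF _ bX_V d k r] Rz_lin[OF _ bX_V r] by simp
  also have "\<dots> = (\<Sum>m<NN. cX eta m * (H2 d k (bX m) + a * Rz (bX m)))"
    by (simp add: sum.distrib sum_distrib_left algebra_simps)
  also have "\<dots> = 0"
  proof (rule sum.neutral, rule ballI)
    fix m assume m: "m \<in> {..<NN}"
    show "cX eta m * (H2 d k (bX m) + a * Rz (bX m)) = 0"
    proof (cases "cX eta m = 0")
      case False then show ?thesis using cX_zero[OF eta False] T m by auto
    qed simp
  qed
  finally show "H2 d k eta + a * Rz eta = 0" .
qed

lemma Mat_inj:
  assumes z: "\<forall>l<NN. (\<Sum>m<NN. Mat l m * c m) = 0"
  shows "\<forall>m<NN. c m = 0"
proof -
  have na: "\<forall>m<NN. \<not> adm m \<longrightarrow> c m = 0"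
  proof (intro allI impI)
    fix m assume m: "m < NN" and na: "\<not> adm m"
    have "(\<Sum>m'<NN. Mat m m' * c m') = (\<Sum>m'<NN. if m = m' then c m' else 0)"
      by (intro sum.cong refl) (simp add: Mat_def na)
    then show "c m = 0" using z m by simp
  qed
  have d: "UX c \<in> VVh_d J per PD P0 P1 P2" by (rule UX_d[OF na])
  have k: "UK c \<in> WW_sharp lumped J per P0" by (rule UK_W[OF na])
  have T0: "Tst l (UX c) (UK c) = 0" if l: "l < NN" "adm l" for l
  proof -
    have "Tst l (UX c) (UK c) = (\<Sum>m<NN. Mat l m * c m)"
      using Tst_lin[OF l(1)] l(2) by (simp add: Mat_def mult.commute)
    then show ?thesis using z l by simp
  qed
  have h1: "\<forall>ch\<in>WW_sharp lumped J per P0. H1 (UX c) (UK c) ch = 0"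
  proof (rule all_H1[OF UX_V UK_V], intro allI impI)
    fix l assume "l < NN" "adm l \<and> \<not> l mod 4 < 2"
    then show "H1 (UX c) (UK c) (bK l) = 0" using T0[of l] by (simp add: Tst_def)
  qed
  have h2: "\<forall>eta\<in>VVh_d J per PD P0 P1 P2. H2 (UX c) (UK c) eta + 0 * Rz eta = 0"
  proof (rule all_H2[OF UX_V UK_V], intro allI impI)
    fix l assume "l < NN" "adm l \<and> l mod 4 < 2"
    then show "H2 (UX c) (UK c) (bX l) + 0 * Rz (bX l) = 0" using T0[of l] by (simp add: Tst_def)
  qed
  have Z: "\<forall>x\<in>{0..1}. UX c x = 0 \<and> UK c x = 0"
    by (rule homog_zero[OF d k h1]) (use h2 in simp)
  show ?thesis
  proof (intro allI impI)
    fix m assume m: "m < NN"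
    define i where "i = m div 4"
    have i: "i < nM J per" using mdiv[OF m] by (simp add: i_def)
    have "node J i \<in> {0..1}" using i node_in01[OF J0, of i] by (auto simp: nM_def split: if_splits)
    then have "UX c (node J i) = 0" "UK c (node J i) = 0" using Z by auto
    then have "c (i*4) *\<^sub>R e1 + c (i*4+1) *\<^sub>R e2 = 0" "c (i*4+2) *\<^sub>R e1 + c (i*4+3) *\<^sub>R e2 = 0"
      using eval_nodes[OF i, of c] by (simp_all add: UX_def UK_def)
    then have "c (i*4) = 0" "c (i*4+1) = 0" "c (i*4+2) = 0" "c (i*4+3) = 0"
      by (simp_all add: e1_def e2_def zero_prod_def)
    moreover have "m = i*4 \<or> m = i*4+1 \<or> m = i*4+2 \<or> m = i*4+3" unfolding i_def by presburger
    ultimately show "c m = 0" by auto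
  qed
qed

lemma existence:
  "\<exists>dX K. dX \<in> VVh_d J per PD P0 P1 P2 \<and> K \<in> WW_sharp lumped J per P0 \<and>
      scheme_eqs lumped J per PD P0 P1 P2 rh dt Xm dX K"
proof -
  obtain c where c: "\<forall>l<NN. (\<Sum>m<NN. Mat l m * c m) = rhs l"
    using GL[of NN Mat rhs] Mat_inj by blast
  have na: "\<forall>m<NN. \<not> adm m \<longrightarrow> c m = 0"
  proof (intro allI impI)
    fix m assume m: "m < NN" and na: "\<not> adm m"
    have "(\<Sum>m'<NN. Mat m m' * c m') = (\<Sum>m'<NN. if m = m' then c m' else 0)"
      by (intro sum.cong refl) (simp add: Mat_def na)
    then show "c m = 0" using c m na by (simp add: rhs_def)
  qed
  have d: "UX c \<in> VVh_d J per PD P0 P1 P2" by (rule UX_d[OF na])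
  have k: "UK c \<in> WW_sharp lumped J per P0" by (rule UK_W[OF na])
  have T: "Tst l (UX c) (UK c) = rhs l" if l: "l < NN" "adm l" for l
  proof -
    have "Tst l (UX c) (UK c) = (\<Sum>m<NN. Mat l m * c m)"
      using Tst_lin[OF l(1)] l(2) by (simp add: Mat_def mult.commute)
    then show ?thesis using c l by simp
  qed
  have h1: "\<forall>ch\<in>WW_sharp lumped J per P0. H1 (UX c) (UK c) ch = 0"
  proof (rule all_H1[OF UX_V UK_V], intro allI impI)
    fix l assume "l < NN" "adm l \<and> \<not> l mod 4 < 2"
    then show "H1 (UX c) (UK c) (bK l) = 0" using T[of l] by (simp add: Tst_def rhs_def)
  qed
  have h2: "\<forall>eta\<in>VVh_d J per PD P0 P1 P2. H2 (UX c) (UK c) eta + 1 * Rz eta = 0"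
  proof (rule all_H2[OF UX_V UK_V], intro allI impI)
    fix l assume "l < NN" "adm l \<and> l mod 4 < 2"
    then show "H2 (UX c) (UK c) (bX l) + 1 * Rz (bX l) = 0" using T[of l] by (simp add: Tst_def rhs_def)
  qed
  have "scheme_eqs lumped J per PD P0 P1 P2 rh dt Xm (UX c) (UK c)"
    using h1 h2 scheme_iff[OF UX_V UK_V, of c c] by simp
  then show ?thesis using d k by blast
qed

lemma uniqueness:
  assumes d1: "dX \<in> VVh_d J per PD P0 P1 P2" and k1: "K \<in> WW_sharp lumped J per P0"
    and s1: "scheme_eqs lumped J per PD P0 P1 P2 rh dt Xm dX K"
    and d2: "dX' \<in> VVh_d J per PD P0 P1 P2" and k2: "K' \<in> WW_sharp lumped J per P0"
    and s2: "scheme_eqs lumped J per PD P0 P1 P2 rh dt Xm dX' K'"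
  shows "\<forall>x\<in>{0..1}. dX' x = dX x \<and> K' x = K x"
proof -
  define ds where "ds l = (if l = (0::nat) then dX' else dX)" for l
  define ks where "ks l = (if l = (0::nat) then K' else K)" for l
  define cc where "cc l = (if l = (0::nat) then 1 else (-1::real))" for l
  have dV: "ds l \<in> VVh J per" "ks l \<in> VVh J per" for l
    using d1 d2 k1 k2 by (auto simp: ds_def ks_def intro: VVh_d_VVh WW_VVh)
  define d where "d = (\<lambda>x. \<Sum>l\<in>{0::nat,1}. cc l *\<^sub>R ds l x)"
  define k where "k = (\<lambda>x. \<Sum>l\<in>{0::nat,1}. cc l *\<^sub>R ks l x)"
  have dd: "d x = dX' x - dX x" "k x = K' x - K x" for x by (simp_all add: d_def k_def cc_def ds_def ks_def)
  have dD: "d \<in> VVh_d J per PD P0 P1 P2" unfolding d_def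
    by (rule VVh_d_lincomb) (auto simp: ds_def d1 d2)
  have kW: "k \<in> WW_sharp lumped J per P0" unfolding k_def
    by (rule WW_lincomb) (auto simp: ks_def k1 k2)
  note S1 = scheme_iff[OF VVh_d_VVh[OF d1] WW_VVh[OF k1]]
  note S2 = scheme_iff[OF VVh_d_VVh[OF d2] WW_VVh[OF k2]]
  have h1: "\<forall>ch\<in>WW_sharp lumped J per P0. H1 d k ch = 0"
  proof
    fix ch assume ch: "ch \<in> WW_sharp lumped J per P0"
    have "H1 d k ch = (\<Sum>l\<in>{0::nat,1}. cc l * H1 (ds l) (ks l) ch)"
      by (rule H1_lin1[OF _ dV WW_VVh[OF ch]]) (auto simp: d_def k_def)
    also have "\<dots> = 0" using s1 s2 S1 S2 ch by (simp add: cc_def ds_def ks_def)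
    finally show "H1 d k ch = 0" .
  qed
  have h2: "\<forall>eta\<in>VVh_d J per PD P0 P1 P2. H2 d k eta = 0"
  proof
    fix eta assume eta: "eta \<in> VVh_d J per PD P0 P1 P2"
    have "H2 d k eta = (\<Sum>l\<in>{0::nat,1}. cc l * H2 (ds l) (ks l) eta)"
      by (rule H2_lin1[OF _ dV VVh_d_VVh[OF eta]]) (auto simp: d_def k_def)
    also have "\<dots> = H2 dX' K' eta - H2 dX K eta" by (simp add: cc_def ds_def ks_def)
    also have "\<dots> = 0"
    proof -
      have "H2 dX' K' eta + Rz eta = 0" "H2 dX K eta + Rz eta = 0" using s1 s2 S1 S2 eta by auto
      then show ?thesis by simp
    qed
    finally show "H2 d k eta = 0" .
  qed
  have "\<forall>x\<in>{0..1}. d x = 0 \<and> k x = 0" by (rule homog_zero[OF dD kW h1 h2])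
  then show ?thesis by (simp add: dd)
qed

lemma main:
  "\<exists>dX K. dX \<in> VVh_d J per PD P0 P1 P2 \<and> K \<in> WW_sharp lumped J per P0 \<and>
            scheme_eqs lumped J per PD P0 P1 P2 rh dt Xm dX K \<and>
            (\<forall>dX' K'. dX' \<in> VVh_d J per PD P0 P1 P2 \<and> K' \<in> WW_sharp lumped J per P0 \<and>
               scheme_eqs lumped J per PD P0 P1 P2 rh dt Xm dX' K' \<longrightarrow>
               (\<forall>x\<in>{0..1}. dX' x = dX x \<and> K' x = K x))"
  using existence uniqueness by blast

end

theorem lemma4p4:
  fixes lumped per :: bool and J :: nat and PD P0 P1 P2 :: "real set"
    and rh :: "real \<Rightarrow> real" and dt :: real and Xm :: "real \<Rightarrow> real \<times> real"
  assumes "J \<ge> 3"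
    and "boundary_partition per PD P0 P1 P2"
    and "\<forall>p\<in>{0, 1}. \<bar>rh p\<bar> \<le> 1"
    and "Xm \<in> VVh_d0 J per P0"
    and "AE x in lborel. x \<in> {0<..<1} \<longrightarrow> norm (drho Xm x) > 0"
    and "\<forall>\<rho>\<in>{0..1} - P0. Xm \<rho> \<bullet> e1 > 0"
    and "dt > 0"
  shows "\<exists>dX K. dX \<in> VVh_d J per PD P0 P1 P2 \<and> K \<in> WW_sharp lumped J per P0 \<and>
            scheme_eqs lumped J per PD P0 P1 P2 rh dt Xm dX K \<and>
            (\<forall>dX' K'. dX' \<in> VVh_d J per PD P0 P1 P2 \<and> K' \<in> WW_sharp lumped J per P0 \<and>
               scheme_eqs lumped J per PD P0 P1 P2 rh dt Xm dX' K' \<longrightarrow>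
               (\<forall>x\<in>{0..1}. dX' x = dX x \<and> K' x = K x))"
proof -
  interpret scm lumped per J PD P0 P1 P2 rh dt Xm
    using assms by unfold_locales auto
  show ?thesis by (rule main)
qed


end
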